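(* Let $W_1,W_2\subset\mathbb{C}^n$ be germs at $0$ of complex analytic curves, and write their tangent cones as $LD(W_1)=\bigcup_{j=1}^s m_j$ and $LD(W_2)=\bigcup_{j=1}^t l_j$, where $m_1,\dots,m_s$ are pairwise distinct complex lines through $0$ and $l_1,\dots,l_t$ are pairwise distinct complex lines through $0$. Suppose that there is a bi-Lipschitz homeomorphism germ $h:(\mathbb{C}^n,0)\to(\mathbb{C}^n,0)$ with $h(W_1)=W_2$. Then $s=t$.
   Context: Identify $\mathbb{C}^n$ with $\mathbb{R}^{2n}$. For a set-germ $A$ at $0$ with $0\in\overline A$, $D(A)=\{a\in S^{2n-1}:\exists\, x_i\in A\setminus\{0\},\ x_i\to0,\ x_i/\|x_i\|\to a\}$ and $LD(A)=\{ta:a\in D(A),t\ge0\}$; for a complex analytic curve this tangent cone is a finite union of complex lines through $0$. A bi-Lipschitz homeomorphism germ is a homeomorphism germ $h$ with $h(0)=0$ and constants $0<K_1\le K_2$ with $K_1\|x-y\|\le\|h(x)-h(y)\|\le K_2\|x-y\|$ near $0$. *)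

theory Defs
  imports "HOL-Analysis.Analysis"
begin

text \<open>We identify C^n with the type complex^'n (Euclidean norm = norm of R^2n).\<close>

definition holomorphic_several :: "(complex^'n \<Rightarrow> complex) \<Rightarrow> (complex^'n) set \<Rightarrow> bool" where
  "holomorphic_several f U \<longleftrightarrow> (\<forall>z\<in>U. \<exists>f'. (f has_derivative f') (at z) \<and>
      (\<forall>c v. f' (c *s v) = c * f' v))"

definition analytic_germ_at0 :: "(complex^'n) set \<Rightarrow> bool" where
  "analytic_germ_at0 W \<longleftrightarrow> (\<exists>U F. open U \<and> 0 \<in> U \<and> finite F \<and>
      (\<forall>f\<in>F. holomorphic_several f U) \<and> W \<inter> U = {z\<in>U. \<forall>f\<in>F. f z = 0})"

definition complex_curve_manifold :: "(complex^'n) set \<Rightarrow> bool" where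
  "complex_curve_manifold M \<longleftrightarrow> (\<forall>p\<in>M. \<exists>r>0. \<exists>e>0. \<exists>g g'.
      (\<forall>i. (\<lambda>z. g z $ i) holomorphic_on ball 0 e) \<and> (\<exists>i. deriv (\<lambda>z. g z $ i) 0 \<noteq> 0) \<and>
      g 0 = p \<and> homeomorphism (ball 0 e) (M \<inter> ball p r) g g')"

text \<open>Germ at 0 of a complex analytic curve: an analytic germ containing 0, with 0 non-isolated,
  which off the origin (after shrinking) is a one-dimensional complex submanifold
  (curve germs have isolated singularities).\<close>
definition analytic_curve_germ_at0 :: "(complex^'n) set \<Rightarrow> bool" where
  "analytic_curve_germ_at0 W \<longleftrightarrow> analytic_germ_at0 W \<and> 0 \<in> W \<and> 0 \<in> closure (W - {0}) \<and>
      (\<exists>r>0. complex_curve_manifold ((W \<inter> ball 0 r) - {0}))"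

definition tangent_directions :: "('a::real_normed_vector) set \<Rightarrow> 'a set" where
  "tangent_directions A = {a. norm a = 1 \<and> (\<exists>x::nat \<Rightarrow> 'a. (\<forall>i. x i \<in> A - {0}) \<and>
      x \<longlonglongrightarrow> 0 \<and> (\<lambda>i. x i /\<^sub>R norm (x i)) \<longlonglongrightarrow> a)}"

definition tangent_cone :: "('a::real_normed_vector) set \<Rightarrow> 'a set" where
  "tangent_cone A = {t *\<^sub>R a | t a. a \<in> tangent_directions A \<and> t \<ge> 0}"

definition complex_line :: "(complex^'n) set \<Rightarrow> bool" where
  "complex_line m \<longleftrightarrow> (\<exists>v. v \<noteq> 0 \<and> m = {c *s v | c. True})"

definition bilipschitz_germ_map :: "(complex^'n \<Rightarrow> complex^'n) \<Rightarrow> (complex^'n) set \<Rightarrow> (complex^'n) set \<Rightarrow> bool" where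
  "bilipschitz_germ_map h U V \<longleftrightarrow> open U \<and> open V \<and> 0 \<in> U \<and> h 0 = 0 \<and>
      (\<exists>h'. homeomorphism U V h h') \<and>
      (\<exists>K1 K2. 0 < K1 \<and> K1 \<le> K2 \<and> (\<forall>x\<in>U. \<forall>y\<in>U.
          K1 * dist x y \<le> dist (h x) (h y) \<and> dist (h x) (h y) \<le> K2 * dist x y))"

end

theory Submission
  imports Defs "HOL-Complex_Analysis.Conformal_Mappings"
begin

definition cinner :: "complex^'n \<Rightarrow> complex^'n \<Rightarrow> complex" where
  "cinner x a = (\<Sum>i\<in>UNIV. x$i * cnj (a$i))"

lemma norm_sq_vec: "(norm (x::complex^'n))^2 = (\<Sum>i\<in>UNIV. (cmod (x$i))^2)"
  unfolding norm_vec_def L2_set_def by (simp add: sum_nonneg)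

lemma cinner_bound: "cmod (cinner x a) \<le> norm x * norm a"
proof -
  have "cmod (cinner x a) \<le> (\<Sum>i\<in>UNIV. cmod (x$i * cnj (a$i)))"
    unfolding cinner_def by (rule norm_sum)
  also have "\<dots> = (\<Sum>i\<in>UNIV. \<bar>cmod (x$i)\<bar> * \<bar>cmod (a$i)\<bar>)"
    by (simp add: norm_mult)
  also have "\<dots> \<le> L2_set (\<lambda>i. cmod (x$i)) UNIV * L2_set (\<lambda>i. cmod (a$i)) UNIV"
    by (rule L2_set_mult_ineq)
  finally show ?thesis by (simp add: norm_vec_def)
qed

lemma norm_smult_vec: "norm (c *s (v::complex^'n)) = cmod c * norm v"
  by (simp add: scalar_mult_eq_scaleR norm_vec_def L2_set_def norm_mult power_mult_distrib
      sum_distrib_left[symmetric] real_sqrt_mult)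

lemma cinner_diff: "cinner (x - y) a = cinner x a - cinner y a"
  unfolding cinner_def by (simp add: algebra_simps sum_subtractf)

lemma cinner_smult: "cinner (c *s x) a = c * cinner x a"
  unfolding cinner_def by (simp add: algebra_simps sum_distrib_left)

lemma cinner_self: "cinner a a = complex_of_real ((norm a)^2)"
proof -
  have "cinner a a = (\<Sum>i\<in>UNIV. complex_of_real ((cmod (a$i))^2))"
    unfolding cinner_def by (intro sum.cong refl) (simp add: complex_norm_square[symmetric])
  also have "\<dots> = complex_of_real ((norm a)^2)" by (simp add: norm_sq_vec)
  finally show ?thesis .
qed

lemma norm_diff_sq: "(norm (x - p))^2 = (norm x)^2 - 2 * Re (cinner x p) + (norm p)^2"
proof -
  have c: "(cmod (u - v))^2 = (cmod u)^2 - 2 * Re (u * cnj v) + (cmod v)^2" for u v :: complex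
    unfolding cmod_power2 by (simp add: power2_eq_square algebra_simps)
  show ?thesis unfolding norm_sq_vec cinner_def
    by (simp add: c sum_subtractf sum.distrib sum_distrib_left[symmetric] Re_sum)
qed

definition near :: "complex^'n \<Rightarrow> (complex^'n) set \<Rightarrow> real \<Rightarrow> bool" where
  "near y l d \<longleftrightarrow> (\<exists>z\<in>l. dist y z < d * norm y)"

lemma smult_scaleR: "(complex_of_real t) *s (z::complex^'n) = t *\<^sub>R z"
  apply (rule vec_eq_iff[THEN iffD2])
  apply (simp only: vector_smult_component vector_scaleR_component)
  by (simp add: scaleR_conv_of_real)

lemma line_unit:
  assumes "complex_line m"
  obtains a where "norm a = 1" "m = {c *s a | c. True}"
proof -
  obtain v where v: "v \<noteq> 0" "m = {c *s v | c. True}" using assms unfolding complex_line_def by blast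
  define a where "a = complex_of_real (1 / norm v) *s v"
  have na: "norm a = 1" using v(1) by (simp add: a_def norm_smult_vec norm_divide)
  have "m = {c *s a | c. True}"
  proof -
    have "c *s v = (c * complex_of_real (norm v)) *s a" for c
      using v(1) by (simp add: a_def vector_smult_assoc)
    moreover have "c *s a = (c * complex_of_real (1/norm v)) *s v" for c
      by (simp add: a_def vector_smult_assoc)
    ultimately show ?thesis unfolding v(2) by blast
  qed
  with na that show ?thesis by blast
qed

lemma line_smult: "complex_line m \<Longrightarrow> z \<in> m \<Longrightarrow> c *s z \<in> m"
  unfolding complex_line_def by (auto simp: vector_smult_assoc)

lemma line_scaleR: "complex_line m \<Longrightarrow> z \<in> m \<Longrightarrow> t *\<^sub>R z \<in> m"
  using line_smult[of m z "complex_of_real t"] by (simp add: smult_scaleR)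

lemma line_zero: "complex_line m \<Longrightarrow> 0 \<in> m"
  using line_scaleR[of m _ 0] unfolding complex_line_def by auto

lemma tendsto_cinner: "(f \<longlongrightarrow> l) F \<Longrightarrow> ((\<lambda>x. cinner (f x) a) \<longlongrightarrow> cinner l a) F"
  unfolding cinner_def
  by (intro tendsto_sum tendsto_mult tendsto_vec_nth tendsto_const)

lemma continuous_on_cinner: "continuous_on S f \<Longrightarrow> continuous_on S (\<lambda>x. cinner (f x) a)"
  unfolding cinner_def
  by (intro continuous_on_sum continuous_on_mult continuous_on_component continuous_on_const) auto

lemma tendsto_smult: "(c \<longlongrightarrow> d) F \<Longrightarrow> ((\<lambda>x. c x *s a) \<longlongrightarrow> d *s (a::complex^'n)) F"
  by (rule vec_tendstoI) (simp add: tendsto_mult tendsto_const)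

lemma line_closed:
  assumes "complex_line m" shows "closed m"
proof -
  obtain a where a: "norm a = 1" "m = {c *s a | c. True}" using line_unit[OF assms] by blast
  have ca: "cinner (c *s a) a = c" for c
    using a(1) by (simp add: cinner_smult cinner_self)
  show ?thesis unfolding closed_sequential_limits
  proof (intro allI impI, elim conjE)
    fix x l assume x: "\<forall>n. x n \<in> m" and lim: "x \<longlonglongrightarrow> l"
    have "\<forall>n. \<exists>c. x n = c *s a" using x a(2) by blast
    then obtain c where c: "\<And>n. x n = c n *s a" by metis
    have "(\<lambda>n. cinner (x n) a) \<longlonglongrightarrow> cinner l a"
      using lim by (rule tendsto_cinner)
    hence "c \<longlonglongrightarrow> cinner l a" using c ca by simp
    hence "(\<lambda>n. c n *s a) \<longlonglongrightarrow> cinner l a *s a"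
      by (rule tendsto_smult)
    moreover have "x = (\<lambda>n. c n *s a)" using c by auto
    ultimately have "l = cinner l a *s a" using lim LIMSEQ_unique by metis
    thus "l \<in> m" using a(2) by blast
  qed
qed

lemma unit_subseq:
  fixes u :: "nat \<Rightarrow> 'a::euclidean_space"
  assumes "\<And>k. norm (u k) = 1"
  obtains \<sigma> u0 where "strict_mono \<sigma>" "(u \<circ> \<sigma>) \<longlonglongrightarrow> u0" "norm u0 = 1"
proof -
  have "compact (sphere (0::'a) 1)" by simp
  hence "seq_compact (sphere (0::'a) 1)" by (rule compact_imp_seq_compact)
  moreover have "\<forall>k. u k \<in> sphere 0 1" using assms by simp
  ultimately obtain u0 \<sigma> where "u0 \<in> sphere 0 1" "strict_mono \<sigma>" "(u \<circ> \<sigma>) \<longlonglongrightarrow> u0"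
    unfolding seq_compact_def by metis
  thus ?thesis using that by simp
qed

lemma inv_suc_le: "strict_mono \<sigma> \<Longrightarrow> inverse (real (Suc (\<sigma> k))) \<le> inverse (real (Suc k))"
  using seq_suble[of \<sigma> k] by (simp add: le_imp_inverse_le)

lemma line_span:
  assumes "complex_line m" "w \<in> m" "w \<noteq> 0"
  shows "m = {c *s w | c. True}"
proof -
  obtain a where a: "norm a = 1" "m = {c *s a | c. True}" using line_unit[OF assms(1)] by blast
  obtain d where d: "w = d *s a" using assms(2) a(2) by blast
  have "d \<noteq> 0" using d assms(3) by auto
  have "c *s a = (c / d) *s w" for c using \<open>d \<noteq> 0\<close> by (simp add: d vector_smult_assoc)
  moreover have "c *s w = (c * d) *s a" for c by (simp add: d vector_smult_assoc)
  ultimately show ?thesis unfolding a(2) by blast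
qed

lemma lines_inter:
  assumes "complex_line m" "complex_line m'" "m \<noteq> m'" "w \<in> m" "w \<in> m'"
  shows "w = 0"
  using line_span[OF assms(1,4)] line_span[OF assms(2,5)] assms(3) by blast

lemma sep_pair:
  assumes l: "complex_line l" and l': "complex_line l'" and ne: "l \<noteq> l'"
  shows "\<exists>c0>0. \<forall>z\<in>l. \<forall>z'\<in>l'. c0 * norm z \<le> dist z z'"
proof (rule ccontr)
  assume neg: "\<not> ?thesis"
  hence "\<forall>k. \<exists>z\<in>l. \<exists>z'\<in>l'. dist z z' < inverse (real (Suc k)) * norm z"
  proof (intro allI)
    fix k
    have "inverse (real (Suc k)) > 0" by simp
    with neg show "\<exists>z\<in>l. \<exists>z'\<in>l'. dist z z' < inverse (real (Suc k)) * norm z"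
      by (meson not_le)
  qed
  then obtain z z' where zz: "\<And>k. z k \<in> l" "\<And>k. z' k \<in> l'"
    "\<And>k. dist (z k) (z' k) < inverse (real (Suc k)) * norm (z k)" by metis
  have nz: "z k \<noteq> 0" for k using zz(3)[of k] by auto
  define u where "u k = (1 / norm (z k)) *\<^sub>R z k" for k
  define u' where "u' k = (1 / norm (z k)) *\<^sub>R z' k" for k
  have u1: "norm (u k) = 1" for k using nz by (simp add: u_def)
  have ul: "u k \<in> l" for k using line_scaleR[OF l zz(1)] u_def by simp
  have ul': "u' k \<in> l'" for k using line_scaleR[OF l' zz(2)] u'_def by simp
  have du: "norm (u' k - u k) \<le> inverse (real (Suc k))" for k
  proof -
    have "u' k - u k = (1 / norm (z k)) *\<^sub>R (z' k - z k)"
      by (simp add: u_def u'_def scaleR_diff_right)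
    hence "norm (u' k - u k) = dist (z k) (z' k) / norm (z k)"
      by (simp add: dist_norm norm_minus_commute)
    also have "\<dots> \<le> inverse (real (Suc k))"
      using zz(3)[of k] nz by (simp add: divide_le_eq)
    finally show ?thesis .
  qed
  obtain \<sigma> u0 where s: "strict_mono \<sigma>" "(u \<circ> \<sigma>) \<longlonglongrightarrow> u0" "norm u0 = 1"
    using unit_subseq[of u] u1 by blast
  have "(\<lambda>k. u' (\<sigma> k) - u (\<sigma> k)) \<longlonglongrightarrow> 0"
  proof (rule Lim_null_comparison)
    show "\<forall>\<^sub>F k in sequentially. norm (u' (\<sigma> k) - u (\<sigma> k)) \<le> inverse (real (Suc k))"
      by (intro always_eventually allI) (rule order_trans[OF du inv_suc_le[OF s(1)]])
    show "(\<lambda>k. inverse (real (Suc k))) \<longlonglongrightarrow> 0" by (rule LIMSEQ_inverse_real_of_nat)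
  qed
  hence "(\<lambda>k. u (\<sigma> k) + (u' (\<sigma> k) - u (\<sigma> k))) \<longlonglongrightarrow> u0 + 0"
    using s(2) by (intro tendsto_add) (auto simp: o_def)
  hence t': "(u' \<circ> \<sigma>) \<longlonglongrightarrow> u0" by (simp add: o_def)
  have "u0 \<in> l" using closed_sequential_limits[THEN iffD1, OF line_closed[OF l], rule_format, of "u \<circ> \<sigma>" u0] s(2) ul by auto
  moreover have "u0 \<in> l'" using closed_sequential_limits[THEN iffD1, OF line_closed[OF l'], rule_format, of "u' \<circ> \<sigma>" u0] t' ul' by auto
  ultimately have "u0 = 0" using lines_inter[OF l l' ne] by blast
  with s(3) show False by simp
qed

lemma sep_pair2:
  assumes "complex_line l" "complex_line l'" "l \<noteq> l'"
  shows "\<exists>c>0. \<forall>y z z'. z \<in> l \<longrightarrow> z' \<in> l' \<longrightarrow> c * norm y \<le> dist y z + dist y z'"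
proof -
  obtain c0 where c0: "c0 > 0" "\<And>z z'. z \<in> l \<Longrightarrow> z' \<in> l' \<Longrightarrow> c0 * norm z \<le> dist z z'"
    using sep_pair[OF assms] by blast
  define c where "c = c0 / (1 + c0)"
  have "c > 0" using c0 by (simp add: c_def)
  moreover have "c * norm y \<le> dist y z + dist y z'" if "z \<in> l" "z' \<in> l'" for y z z'
  proof -
    have a: "c0 * norm z \<le> dist y z + dist y z'"
      using c0(2)[OF that] dist_triangle[of z z' y] by (simp add: dist_commute)
    have b: "norm y \<le> dist y z + norm z"
      using norm_triangle_ineq[of "y - z" z] by (simp add: dist_norm)
    have "c0 * norm y \<le> c0 * dist y z + c0 * norm z" using b c0(1)
      by (metis distrib_left mult_left_mono less_imp_le)
    also have "\<dots> \<le> (1 + c0) * (dist y z + dist y z')"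
    proof -
      have "0 \<le> c0 * dist y z'" using c0(1) by simp
      thus ?thesis using a by (simp add: distrib_left distrib_right)
    qed
    finally have "c0 * norm y \<le> (1 + c0) * (dist y z + dist y z')" .
    thus ?thesis unfolding c_def using c0(1)
      by (simp add: divide_le_eq mult.commute)
  qed
  ultimately show ?thesis by blast
qed

lemma sep_finite:
  assumes "finite L" "\<forall>l\<in>L. complex_line l"
  shows "\<exists>c>0. \<forall>l\<in>L. \<forall>l'\<in>L. l \<noteq> l' \<longrightarrow> (\<forall>y z z'. z \<in> l \<longrightarrow> z' \<in> l' \<longrightarrow> c * norm y \<le> dist y z + dist y z')"
proof -
  define P where "P = {(l,l'). l\<in>L \<and> l'\<in>L \<and> l \<noteq> l'}"
  have "\<forall>p\<in>P. \<exists>c. c > 0 \<and> (\<forall>y z z'. z \<in> fst p \<longrightarrow> z' \<in> snd p \<longrightarrow> c * norm y \<le> dist y z + dist y z')"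
  proof
    fix p assume "p \<in> P"
    then obtain l l' where "p = (l,l')" "l\<in>L" "l'\<in>L" "l\<noteq>l'" unfolding P_def by auto
    thus "\<exists>c. c > 0 \<and> (\<forall>y z z'. z \<in> fst p \<longrightarrow> z' \<in> snd p \<longrightarrow> c * norm y \<le> dist y z + dist y z')"
      using sep_pair2[of l l'] assms(2) by simp
  qed
  then obtain C where C0: "\<forall>p\<in>P. C p > 0 \<and> (\<forall>y z z'. z \<in> fst p \<longrightarrow> z' \<in> snd p \<longrightarrow> C p * norm y \<le> dist y z + dist y z')"
    by (rule bchoice[THEN exE]) blast
  hence C: "\<And>p. p \<in> P \<Longrightarrow> C p > 0 \<and> (\<forall>y z z'. z \<in> fst p \<longrightarrow> z' \<in> snd p \<longrightarrow> C p * norm y \<le> dist y z + dist y z')" by simp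
  have fP: "finite P" by (rule finite_subset[of P "L \<times> L"]) (auto simp: P_def assms(1))
  define c where "c = Min (insert 1 (C ` P))"
  have "c > 0" unfolding c_def using fP C by (subst Min_gr_iff) auto
  moreover have cle: "c \<le> C p" if "p \<in> P" for p unfolding c_def using fP that by simp
  moreover have "c * norm y \<le> dist y z + dist y z'"
    if "l\<in>L" "l'\<in>L" "l\<noteq>l'" "z\<in>l" "z'\<in>l'" for l l' y z z'
  proof -
    have p: "(l,l') \<in> P" using that by (simp add: P_def)
    have "c * norm y \<le> C (l,l') * norm y" using cle[OF p] by (intro mult_right_mono) auto
    also have "\<dots> \<le> dist y z + dist y z'" using C[OF p] that by auto
    finally show ?thesis .
  qed
  ultimately show ?thesis by blast
qed

lemma near_unique:
  assumes "near y l d" "near y l' d'" "d + d' \<le> c"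
    and "\<forall>y z z'. z \<in> l \<longrightarrow> z' \<in> l' \<longrightarrow> c * norm y \<le> dist y z + dist y z'"
  shows False
proof -
  obtain z z' where "z \<in> l" "z' \<in> l'" "dist y z < d * norm y" "dist y z' < d' * norm y"
    using assms(1,2) unfolding near_def by blast
  moreover have "(d + d') * norm y \<le> c * norm y" using assms(3) by (simp add: mult_right_mono)
  moreover have "c * norm y \<le> dist y z + dist y z'" using assms(4) calculation by blast
  ultimately show False by (simp add: distrib_right)
qed

lemma tdir_in_cone: "a \<in> tangent_directions A \<Longrightarrow> a \<in> tangent_cone A"
  unfolding tangent_cone_def by (rule CollectI, rule exI[of _ 1], rule exI[of _ a]) simp

lemma cone_unit_dir:
  assumes "a \<in> tangent_cone A" "norm a = 1" shows "a \<in> tangent_directions A"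
proof -
  obtain t b where tb: "a = t *\<^sub>R b" "b \<in> tangent_directions A" "t \<ge> 0"
    using assms(1) unfolding tangent_cone_def by blast
  have "norm b = 1" using tb(2) unfolding tangent_directions_def by simp
  hence "t = 1" using assms(2) tb by simp
  thus ?thesis using tb by simp
qed

lemma unif_dir:
  fixes A :: "(complex^'n) set"
  assumes cone: "tangent_cone A = \<Union>L" and lines: "\<forall>l\<in>L. complex_line l" and d: "d > 0"
  shows "\<exists>r>0. \<forall>y\<in>A. y \<noteq> 0 \<and> norm y < r \<longrightarrow> (\<exists>l\<in>L. near y l d)"
proof (rule ccontr)
  assume neg: "\<not> ?thesis"
  have "\<forall>k. \<exists>y. y \<in> A \<and> y \<noteq> 0 \<and> norm y < inverse (real (Suc k)) \<and> (\<forall>l\<in>L. \<not> near y l d)"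
  proof
    fix k
    have "inverse (real (Suc k)) > 0" by simp
    thus "\<exists>y. y \<in> A \<and> y \<noteq> 0 \<and> norm y < inverse (real (Suc k)) \<and> (\<forall>l\<in>L. \<not> near y l d)"
      using neg by blast
  qed
  then obtain y where y: "\<And>k. y k \<in> A" "\<And>k. y k \<noteq> 0" "\<And>k. norm (y k) < inverse (real (Suc k))"
    "\<And>k l. l \<in> L \<Longrightarrow> \<not> near (y k) l d" by metis
  define u where "u k = y k /\<^sub>R norm (y k)" for k
  have u1: "norm (u k) = 1" for k using y(2) by (simp add: u_def)
  obtain \<sigma> u0 where s: "strict_mono \<sigma>" "(u \<circ> \<sigma>) \<longlonglongrightarrow> u0" "norm u0 = 1"
    using unit_subseq[of u] u1 by blast
  have y0: "(y \<circ> \<sigma>) \<longlonglongrightarrow> 0"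
  proof (rule Lim_null_comparison)
    show "\<forall>\<^sub>F k in sequentially. norm ((y \<circ> \<sigma>) k) \<le> inverse (real (Suc k))"
    proof (intro always_eventually allI)
      fix k
      have 1: "norm (y (\<sigma> k)) < inverse (real (Suc (\<sigma> k)))" by (rule y(3))
      have 2: "inverse (real (Suc (\<sigma> k))) \<le> inverse (real (Suc k))" by (rule inv_suc_le[OF s(1)])
      from 1 2 have "norm (y (\<sigma> k)) \<le> inverse (real (Suc k))" by linarith
      thus "norm ((y \<circ> \<sigma>) k) \<le> inverse (real (Suc k))" by simp
    qed
    show "(\<lambda>k. inverse (real (Suc k))) \<longlonglongrightarrow> 0" by (rule LIMSEQ_inverse_real_of_nat)
  qed
  have "u0 \<in> tangent_directions A"
    unfolding tangent_directions_def
  proof (intro CollectI conjI exI[of _ "y \<circ> \<sigma>"] allI)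
    show "norm u0 = 1" by fact
    show "(y \<circ> \<sigma>) k \<in> A - {0}" for k using y by simp
    show "(y \<circ> \<sigma>) \<longlonglongrightarrow> 0" by fact
    show "(\<lambda>i. (y \<circ> \<sigma>) i /\<^sub>R norm ((y \<circ> \<sigma>) i)) \<longlonglongrightarrow> u0" using s(2) by (simp add: u_def o_def)
  qed
  hence "u0 \<in> \<Union>L" using cone tdir_in_cone by blast
  then obtain l where l: "l \<in> L" "u0 \<in> l" by blast
  have "\<forall>\<^sub>F k in sequentially. dist ((u \<circ> \<sigma>) k) u0 < d" using s(2) d by (rule tendstoD)
  then obtain N where "\<forall>n\<ge>N. dist ((u \<circ> \<sigma>) n) u0 < d" unfolding eventually_sequentially by blast
  hence k: "dist (u (\<sigma> N)) u0 < d" by simp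
  define k where "k = N"
  note k = k[folded k_def]
  let ?y = "y (\<sigma> k)"
  have zl: "norm ?y *\<^sub>R u0 \<in> l" using line_scaleR lines l by blast
  have "?y - norm ?y *\<^sub>R u0 = norm ?y *\<^sub>R (u (\<sigma> k) - u0)"
    using y(2) by (simp add: u_def scaleR_diff_right)
  hence "dist ?y (norm ?y *\<^sub>R u0) = norm ?y * dist (u (\<sigma> k)) u0" by (simp add: dist_norm)
  also have "\<dots> < d * norm ?y" using k y(2) by (simp add: mult.commute)
  finally have "near ?y l d" unfolding near_def using zl by blast
  with y(4) l show False by blast
qed

definition bilip :: "(complex^'n \<Rightarrow> complex^'n) \<Rightarrow> (complex^'n) set \<Rightarrow> real \<Rightarrow> real \<Rightarrow> bool" where
  "bilip h U K1 K2 \<longleftrightarrow> 0 < K1 \<and> K1 \<le> K2 \<and> (\<forall>x\<in>U. \<forall>y\<in>U. K1 * dist x y \<le> dist (h x) (h y) \<and> dist (h x) (h y) \<le> K2 * dist x y)"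

definition SP :: "(complex^'n) set \<Rightarrow> (complex^'n) set \<Rightarrow> bool" where
  "SP W m \<longleftrightarrow> (\<forall>e>0. \<exists>r>0. \<forall>q\<in>m. q \<noteq> 0 \<and> norm q < r \<longrightarrow> (\<exists>x\<in>W. dist x q \<le> e * norm q))"

definition Rel :: "(complex^'n \<Rightarrow> complex^'n) \<Rightarrow> (complex^'n) set \<Rightarrow> (complex^'n) set \<Rightarrow> (complex^'n) set \<Rightarrow> (complex^'n) set \<Rightarrow> bool" where
  "Rel h U W m l \<longleftrightarrow> (\<exists>x a b. (\<forall>k. x k \<in> W \<inter> U - {0}) \<and> x \<longlonglongrightarrow> 0 \<and>
      (\<lambda>k. x k /\<^sub>R norm (x k)) \<longlonglongrightarrow> a \<and> a \<in> m \<and> (\<lambda>k. h (x k) /\<^sub>R norm (h (x k))) \<longlonglongrightarrow> b \<and> b \<in> l)"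

lemma key_est:
  fixes q q' x x' z :: "complex^'n"
  assumes bl: "bilip h U K1 K2" and xU: "x \<in> U" "x' \<in> U" "0 \<in> U" and h0: "h 0 = 0"
    and c: "c > 0" and de: "\<delta> = c * K1 / (32 * K2)" "\<epsilon> \<le> c * K1 / (128 * K2)" "\<epsilon> \<le> 1/4" "\<epsilon> > 0"
    and qq: "dist q q' \<le> \<epsilon> * norm q" and wx: "dist x q \<le> \<epsilon> * norm q" and wx': "dist x' q' \<le> \<epsilon> * norm q'"
    and z: "dist (h x) z < \<delta> * norm (h x)" and q0: "q \<noteq> 0"
  shows "dist (h x') z < (c - \<delta>) * norm (h x')"
proof -
  have K: "0 < K1" "K1 \<le> K2" and Lip: "\<And>u v. u \<in> U \<Longrightarrow> v \<in> U \<Longrightarrow> K1 * dist u v \<le> dist (h u) (h v) \<and> dist (h u) (h v) \<le> K2 * dist u v"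
    using bl unfolding bilip_def by auto
  have K2p: "K2 > 0" using K by linarith
  have dle: "\<delta> \<le> c / 32"
  proof -
    have "c * K1 \<le> c * K2" using K c by (intro mult_left_mono) auto
    hence "c * K1 / (32 * K2) \<le> c * K2 / (32 * K2)" using K2p by (intro divide_right_mono) auto
    thus ?thesis using de(1) K2p by simp
  qed
  define n where "n = norm q"
  have n0: "n \<ge> 0" by (simp add: n_def)
  have e1: "\<epsilon> * n \<le> (1/4) * n" using de(3) n0 by (rule mult_right_mono)
  have t1: "norm q' \<le> norm (q' - q) + n" using norm_triangle_ineq[of "q' - q" q] by (simp add: n_def)
  have t2: "n \<le> norm (q - q') + norm q'" using norm_triangle_ineq[of "q - q'" q'] by (simp add: n_def)
  have qq': "norm (q - q') \<le> \<epsilon> * n" "norm (q' - q) \<le> \<epsilon> * n" using qq by (auto simp: dist_norm n_def norm_minus_commute)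
  have nq': "norm q' \<le> 2 * n" "norm q' \<ge> (1 - \<epsilon>) * n"
    using t1 t2 qq' e1 n0 by (linarith, simp add: algebra_simps)
  have nx: "norm x \<le> 2 * n"
    using wx norm_triangle_ineq[of "x - q" q] e1 n0 unfolding dist_norm n_def by (simp only: diff_add_cancel)
  have nx': "norm x' \<ge> (1 - \<epsilon>) * norm q'"
    using wx' norm_triangle_ineq[of "q' - x'" x'] by (auto simp: dist_norm norm_minus_commute algebra_simps)
  have dxx: "dist x x' \<le> 4 * \<epsilon> * n"
  proof -
    have "dist x x' \<le> dist x q + dist q q' + dist q' x'"
      using dist_triangle[of x x' q] dist_triangle[of q x' q'] by linarith
    also have "\<dots> \<le> \<epsilon> * n + \<epsilon> * n + \<epsilon> * (2 * n)"
    proof -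
      have "\<epsilon> * norm q' \<le> \<epsilon> * (2 * n)" using nq'(1) de(4) by (simp add: mult_left_mono)
      thus ?thesis using wx qq wx' unfolding n_def by (simp add: dist_commute)
    qed
    finally show ?thesis by simp
  qed
  have hx: "norm (h x) \<le> K2 * (2 * n)"
  proof -
    have "norm (h x) = dist (h x) (h 0)" using h0 by simp
    also have "\<dots> \<le> K2 * norm x" using Lip[OF xU(1) xU(3)] by simp
    also have "\<dots> \<le> K2 * (2 * n)" using nx K2p by (simp add: mult_left_mono)
    finally show ?thesis .
  qed
  have hx': "norm (h x') \<ge> K1 * (n / 2)"
  proof -
    have e34: "1 - \<epsilon> \<ge> 3/4" using de by simp
    have "(3/4) * ((3/4) * n) \<le> (1 - \<epsilon>) * ((1 - \<epsilon>) * n)"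
      using e34 n0 by (intro mult_mono) auto
    hence "n / 2 \<le> (1 - \<epsilon>) * ((1 - \<epsilon>) * n)" using n0 by simp
    also have "\<dots> \<le> (1 - \<epsilon>) * norm q'" using nq'(2) e34 by (intro mult_left_mono) auto
    also have "\<dots> \<le> norm x'" by (rule nx')
    finally have "norm x' \<ge> n / 2" .
    hence "K1 * (n / 2) \<le> K1 * norm x'" using K by (simp add: mult_left_mono)
    also have "\<dots> \<le> dist (h x') (h 0)" using Lip[OF xU(2) xU(3)] by simp
    finally show ?thesis using h0 by simp
  qed
  have "dist (h x') z \<le> dist (h x') (h x) + dist (h x) z" by (rule dist_triangle)
  also have "\<dots> < K2 * dist x x' + \<delta> * norm (h x)"
    using Lip[OF xU(1) xU(2)] z by (simp add: dist_commute)
  also have "\<dots> \<le> K2 * (4 * \<epsilon> * n) + \<delta> * (K2 * (2 * n))"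
  proof -
    have "\<delta> \<ge> 0" using de c K2p K by simp
    thus ?thesis using dxx hx K2p by (intro add_mono mult_left_mono) auto
  qed
  also have "\<dots> \<le> (3/32) * c * K1 * n"
  proof -
    have "K2 * (4 * \<epsilon>) \<le> c * K1 / 32" using de(2) K2p by (simp add: field_simps)
    moreover have "\<delta> * K2 = c * K1 / 32" using de(1) K2p by simp
    ultimately have "K2 * (4 * \<epsilon>) * n + \<delta> * K2 * (2 * n) \<le> c * K1 / 32 * n + c * K1 / 32 * (2 * n)"
      using n0 by (intro add_mono mult_right_mono) auto
    thus ?thesis by (simp add: algebra_simps)
  qed
  also have "\<dots> < (c - \<delta>) * (K1 * (n / 2))"
  proof -
    note dle
    moreover have "n > 0" using q0 by (simp add: n_def)
    ultimately have P: "c * K1 * n > 0" using K c by simp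
    have "(c - \<delta>) * (K1 * (n / 2)) \<ge> (31/32 * c) * (K1 * (n / 2))"
      using \<open>\<delta> \<le> c / 32\<close> K \<open>n > 0\<close> by (intro mult_right_mono) auto
    moreover have "(31/32 * c) * (K1 * (n / 2)) = 31/64 * (c * K1 * n)" by simp
    moreover have "(3/32) * c * K1 * n = 3/32 * (c * K1 * n)" by simp
    ultimately show ?thesis using P by linarith
  qed
  also have "\<dots> \<le> (c - \<delta>) * norm (h x')"
  proof -
    note dle
    thus ?thesis using hx' c by (intro mult_left_mono) auto
  qed
  finally show ?thesis .
qed

lemma scaled_dist:
  fixes y :: "'a::real_normed_vector"
  assumes "y \<noteq> 0" shows "dist y (norm y *\<^sub>R b) = norm y * dist (y /\<^sub>R norm y) b"
proof -
  have "y - norm y *\<^sub>R b = norm y *\<^sub>R (y /\<^sub>R norm y - b)" using assms by (simp add: scaleR_diff_right)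
  thus ?thesis by (simp add: dist_norm)
qed

lemma limit_unit:
  fixes u :: "nat \<Rightarrow> 'a::real_normed_vector"
  assumes "\<And>k. norm (u k) = 1" "u \<longlonglongrightarrow> a" shows "norm a = 1"
proof -
  have "(\<lambda>k. norm (u k)) \<longlonglongrightarrow> norm a" using assms(2) by (rule tendsto_norm)
  hence "(\<lambda>k. 1::real) \<longlonglongrightarrow> norm a" using assms(1) by simp
  from LIMSEQ_unique[OF this tendsto_const] show ?thesis by simp
qed

lemma connected_line_part:
  assumes m: "complex_line m"
  shows "connected {q\<in>m. q \<noteq> 0 \<and> norm q < r}"
proof -
  obtain a where a: "norm a = 1" "m = {c *s a | c. True}" using line_unit[OF m] by blast
  have eq: "{q\<in>m. q \<noteq> 0 \<and> norm q < r} = (\<lambda>w. w *s a) ` (ball 0 r - {0})"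
  proof (intro set_eqI iffI)
    fix q assume "q \<in> {q\<in>m. q \<noteq> 0 \<and> norm q < r}"
    then obtain w where "q = w *s a" "q \<noteq> 0" "norm q < r" using a(2) by blast
    moreover hence "w \<noteq> 0" by auto
    ultimately show "q \<in> (\<lambda>w. w *s a) ` (ball 0 r - {0})"
      using a(1) by (intro image_eqI[of _ _ w]) (auto simp: norm_smult_vec)
  next
    fix q assume "q \<in> (\<lambda>w. w *s a) ` (ball 0 r - {0})"
    then obtain w where "q = w *s a" "w \<in> ball 0 r - {0}" by (rule imageE)
    hence "q = w *s a" "w \<noteq> 0" "cmod w < r" by auto
    moreover have "w *s a \<noteq> 0"
    proof -
      have "norm (w *s a) \<noteq> 0" using \<open>w \<noteq> 0\<close> a(1) by (simp add: norm_smult_vec)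
      thus ?thesis by auto
    qed
    ultimately show "q \<in> {q\<in>m. q \<noteq> 0 \<and> norm q < r}" using a by (auto simp: norm_smult_vec)
  qed
  have "continuous_on (ball 0 r - {0}) (\<lambda>w. w *s a)"
    unfolding continuous_on_def by (intro ballI tendsto_smult tendsto_ident_at)
  moreover have "connected (ball (0::complex) r - {0})" by (rule connected_punctured_ball) simp
  ultimately show ?thesis unfolding eq using connected_continuous_image by blast
qed

lemma functional:
  fixes h :: "complex^'n \<Rightarrow> complex^'n"
  assumes bl: "bilip h U K1 K2" and U: "open U" "0 \<in> U" and h0: "h 0 = 0"
    and hW: "h ` (W1 \<inter> U) \<subseteq> W2" and sp: "SP W1 m" and m: "complex_line m"
    and ud: "\<forall>d>0. \<exists>r>0. \<forall>y\<in>W2. y \<noteq> 0 \<and> norm y < r \<longrightarrow> (\<exists>l\<in>L. near y l d)"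
    and c: "c > 0"
    and sepL: "\<forall>l\<in>L. \<forall>l'\<in>L. l \<noteq> l' \<longrightarrow> (\<forall>y z z'. z \<in> l \<longrightarrow> z' \<in> l' \<longrightarrow> c * norm y \<le> dist y z + dist y z')"
    and R1: "Rel h U W1 m l1" and R2: "Rel h U W1 m l2" and l12: "l1 \<in> L" "l2 \<in> L"
    and lines: "\<forall>l\<in>L. complex_line l"
  shows "l1 = l2"
proof -
  have K: "0 < K1" "K1 \<le> K2" and Lip: "\<And>u v. u \<in> U \<Longrightarrow> v \<in> U \<Longrightarrow> K1 * dist u v \<le> dist (h u) (h v) \<and> dist (h u) (h v) \<le> K2 * dist u v"
    using bl unfolding bilip_def by auto
  have K2p: "K2 > 0" using K by linarith
  define \<delta> where "\<delta> = c * K1 / (32 * K2)"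
  define \<epsilon> where "\<epsilon> = min (1/4) (c * K1 / (128 * K2))"
  have dp: "\<delta> > 0" using c K K2p by (simp add: \<delta>_def)
  have ep: "\<epsilon> > 0" "\<epsilon> \<le> 1/4" "\<epsilon> \<le> c * K1 / (128 * K2)" using c K K2p by (auto simp: \<epsilon>_def)
  obtain r2 where r2: "r2 > 0" "\<And>y. y \<in> W2 \<Longrightarrow> y \<noteq> 0 \<Longrightarrow> norm y < r2 \<Longrightarrow> \<exists>l\<in>L. near y l \<delta>"
    using ud dp by blast
  obtain r1 where r1: "r1 > 0" "\<And>q. q \<in> m \<Longrightarrow> q \<noteq> 0 \<Longrightarrow> norm q < r1 \<Longrightarrow> \<exists>x\<in>W1. dist x q \<le> \<epsilon> * norm q"
    using sp ep(1) unfolding SP_def by blast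
  obtain rU where rU: "rU > 0" "ball 0 rU \<subseteq> U" using U open_contains_ball by blast
  define r where "r = min r1 (min (rU/2) (r2/(2*K2)))"
  have rp: "r > 0" using r1 rU r2 K2p by (simp add: r_def)
  define Q where "Q = {q\<in>m. q \<noteq> 0 \<and> norm q < r}"
  define wit where "wit q x \<longleftrightarrow> x \<in> W1 \<and> dist x q \<le> \<epsilon> * norm q" for q x
  have witU: "x \<in> U \<and> x \<noteq> 0 \<and> h x \<in> W2 \<and> h x \<noteq> 0 \<and> norm (h x) < r2" if q: "q \<in> Q" and w: "wit q x" for q x
  proof -
    have nq: "norm q > 0" "norm q < r" using q by (auto simp: Q_def)
    have e1: "\<epsilon> * norm q \<le> (1/4) * norm q" using ep(2) nq by (intro mult_right_mono) auto
    have dx: "dist x q \<le> \<epsilon> * norm q" using w by (simp add: wit_def)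
    have "norm x \<le> dist x q + norm q" using norm_triangle_ineq[of "x - q" q] by (simp add: dist_norm)
    hence nx: "norm x \<le> 2 * norm q" using dx e1 nq by linarith
    have "norm x < rU" using nx nq unfolding r_def by linarith
    hence xU: "x \<in> U" using rU(2) by auto
    have x0: "x \<noteq> 0"
    proof
      assume "x = 0"
      hence "norm q \<le> \<epsilon> * norm q" using dx by simp
      thus False using e1 nq by linarith
    qed
    have hx: "h x \<in> W2" using hW xU w by (auto simp: wit_def)
    have "K1 * norm x \<le> norm (h x)" using Lip[OF xU U(2)] h0 by simp
    moreover have "K1 * norm x > 0" using K x0 by simp
    ultimately have hx0: "h x \<noteq> 0" by auto
    have "norm (h x) \<le> K2 * norm x" using Lip[OF xU U(2)] h0 by simp
    also have "\<dots> \<le> K2 * (2 * norm q)" using nx K2p by (intro mult_left_mono) auto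
    also have "\<dots> < K2 * (2 * (r2 / (2*K2)))" using nq K2p unfolding r_def by (intro mult_strict_left_mono) auto
    also have "\<dots> = r2" using K2p by simp
    finally show ?thesis using xU x0 hx hx0 by blast
  qed
  have exl: "\<exists>l. l \<in> L \<and> (\<exists>x. wit q x \<and> near (h x) l \<delta>)" if q: "q \<in> Q" for q
  proof -
    obtain x where "x \<in> W1" "dist x q \<le> \<epsilon> * norm q" using r1(2)[of q] q unfolding Q_def r_def by auto
    hence w: "wit q x" by (simp add: wit_def)
    then obtain l where "l \<in> L" "near (h x) l \<delta>" using witU[OF q w] r2(2) by blast
    thus ?thesis using w by blast
  qed
  define lam where "lam q = (SOME l. l \<in> L \<and> (\<exists>x. wit q x \<and> near (h x) l \<delta>))" for q
  have lamP: "lam q \<in> L \<and> (\<exists>x. wit q x \<and> near (h x) (lam q) \<delta>)" if "q \<in> Q" for q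
    unfolding lam_def by (rule someI_ex, rule exl[OF that])
  have est: "near (h x') l (c - \<delta>)"
    if H: "q \<in> Q" "q' \<in> Q" "dist q q' \<le> \<epsilon> * norm q" "wit q x" "wit q' x'" "near (h x) l \<delta>" for q q' x x' l
  proof -
    obtain z where z: "z \<in> l" "dist (h x) z < \<delta> * norm (h x)" using H(6) unfolding near_def by blast
    have "dist (h x') z < (c - \<delta>) * norm (h x')"
    proof (rule key_est[OF bl _ _ U(2) h0 c \<delta>_def ep(3) ep(2) ep(1) H(3) _ _ z(2)])
      show "x \<in> U" using witU H by blast
      show "x' \<in> U" using witU H by blast
      show "dist x q \<le> \<epsilon> * norm q" using H(4) by (simp add: wit_def)
      show "dist x' q' \<le> \<epsilon> * norm q'" using H(5) by (simp add: wit_def)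
      show "q \<noteq> 0" using H(1) by (simp add: Q_def)
    qed
    thus ?thesis using z(1) unfolding near_def by blast
  qed
  have same: "lam q = l"
    if H: "q \<in> Q" "q' \<in> Q" "dist q q' \<le> \<epsilon> * norm q" "wit q' x'" "near (h x') l \<delta>" "l \<in> L" for q q' x' l
  proof (rule ccontr)
    assume ne: "lam q \<noteq> l"
    obtain x where x: "wit q x" "near (h x) (lam q) \<delta>" using lamP[OF H(1)] by blast
    have n1: "near (h x') (lam q) (c - \<delta>)" using est[OF H(1,2,3) x(1) H(4) x(2)] .
    have "lam q \<in> L" using lamP[OF H(1)] by blast
    hence "\<forall>y z z'. z \<in> lam q \<longrightarrow> z' \<in> l \<longrightarrow> c * norm y \<le> dist y z + dist y z'"
      using sepL H(6) ne by blast
    from near_unique[OF n1 H(5) _ this] show False by simp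
  qed
  have conQ: "connected Q" unfolding Q_def by (rule connected_line_part[OF m])
  have const: "lam q = lam q'" if "q \<in> Q" "q' \<in> Q" for q q'
  proof (rule connected_local_const[OF conQ that])
    show "\<forall>a\<in>Q. \<forall>\<^sub>F b in at a within Q. lam a = lam b"
    proof
      fix a assume a: "a \<in> Q"
      have "\<epsilon> * norm a > 0" using ep(1) a by (simp add: Q_def)
      moreover have "lam a = lam b" if B: "b \<in> Q" "dist b a < \<epsilon> * norm a" for b
      proof -
        obtain x' where "wit b x'" "near (h x') (lam b) \<delta>" using lamP[OF B(1)] by blast
        moreover have "lam b \<in> L" using lamP[OF B(1)] by blast
        moreover have "dist a b \<le> \<epsilon> * norm a" using B(2) by (simp add: dist_commute)
        ultimately show ?thesis using same[OF a B(1)] by blast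
      qed
      ultimately show "\<forall>\<^sub>F b in at a within Q. lam a = lam b"
        unfolding eventually_at by blast
    qed
  qed
  have fromR: "\<exists>q\<in>Q. lam q = l" if R: "Rel h U W1 m l" and l: "l \<in> L" for l
  proof -
    obtain x a b where x: "\<And>k. x k \<in> W1 \<inter> U - {0}" "x \<longlonglongrightarrow> 0"
      "(\<lambda>k. x k /\<^sub>R norm (x k)) \<longlonglongrightarrow> a" "a \<in> m" "(\<lambda>k. h (x k) /\<^sub>R norm (h (x k))) \<longlonglongrightarrow> b" "b \<in> l"
      using R unfolding Rel_def by blast
    have na: "norm a = 1" using x(1) by (intro limit_unit[OF _ x(3)]) auto
    have hx0: "h (x k) \<noteq> 0" for k
    proof -
      have "K1 * norm (x k) \<le> norm (h (x k))" using Lip[of "x k" 0] x(1)[of k] U(2) h0 by auto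
      moreover have "K1 * norm (x k) > 0" using K x(1)[of k] by simp
      ultimately show ?thesis by auto
    qed
    have "\<forall>\<^sub>F k in sequentially. dist (x k) 0 < r" using x(2) rp by (rule tendstoD)
    moreover have "\<forall>\<^sub>F k in sequentially. dist (x k /\<^sub>R norm (x k)) a < \<epsilon>" using x(3) ep(1) by (rule tendstoD)
    moreover have "\<forall>\<^sub>F k in sequentially. dist (h (x k) /\<^sub>R norm (h (x k))) b < \<delta>" using x(5) dp by (rule tendstoD)
    ultimately have "\<forall>\<^sub>F k in sequentially. dist (x k) 0 < r \<and> dist (x k /\<^sub>R norm (x k)) a < \<epsilon> \<and> dist (h (x k) /\<^sub>R norm (h (x k))) b < \<delta>"
      by (intro eventually_conj)
    then obtain N where "\<forall>k\<ge>N. dist (x k) 0 < r \<and> dist (x k /\<^sub>R norm (x k)) a < \<epsilon> \<and> dist (h (x k) /\<^sub>R norm (h (x k))) b < \<delta>"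
      unfolding eventually_sequentially by blast
    hence k: "dist (x N) 0 < r" "dist (x N /\<^sub>R norm (x N)) a < \<epsilon>" "dist (h (x N) /\<^sub>R norm (h (x N))) b < \<delta>" by auto
    define q where "q = norm (x N) *\<^sub>R a"
    have xN: "x N \<in> W1" "x N \<noteq> 0" using x(1)[of N] by auto
    have nq: "norm q = norm (x N)" using na by (simp add: q_def)
    have qQ: "q \<in> Q" unfolding Q_def
      using line_scaleR[OF m x(4)] nq xN(2) k(1) by (auto simp: q_def)
    have "dist (x N) q = norm (x N) * dist (x N /\<^sub>R norm (x N)) a" unfolding q_def by (rule scaled_dist[OF xN(2)])
    also have "\<dots> \<le> norm (x N) * \<epsilon>" using k(2) by (intro mult_left_mono) auto
    also have "\<dots> = \<epsilon> * norm q" using nq by simp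
    finally have w: "wit q (x N)" using xN by (simp add: wit_def)
    have "dist (h (x N)) (norm (h (x N)) *\<^sub>R b) = norm (h (x N)) * dist (h (x N) /\<^sub>R norm (h (x N))) b"
      by (rule scaled_dist[OF hx0])
    also have "\<dots> < \<delta> * norm (h (x N))" using k(3) hx0 by (simp add: mult.commute)
    finally have "near (h (x N)) l \<delta>" unfolding near_def using line_scaleR lines l x(6) by blast
    hence "lam q = l" using same[OF qQ qQ _ w _ l] ep(1) by simp
    thus ?thesis using qQ by blast
  qed
  obtain q1 where "q1 \<in> Q" "lam q1 = l1" using fromR[OF R1 l12(1)] by blast
  moreover obtain q2 where "q2 \<in> Q" "lam q2 = l2" using fromR[OF R2 l12(2)] by blast
  ultimately show ?thesis using const by blast
qed

lemma bilip_lower: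
  assumes "bilip h U K1 K2" "x \<in> U" "0 \<in> U" "h 0 = 0"
  shows "K1 * norm x \<le> norm (h x)" "norm (h x) \<le> K2 * norm x"
  using assms unfolding bilip_def by (metis dist_0_norm)+

lemma bilip_nz:
  assumes "bilip h U K1 K2" "x \<in> U" "0 \<in> U" "h 0 = 0" "x \<noteq> 0"
  shows "h x \<noteq> 0"
proof -
  have "K1 * norm x > 0" using assms(1,5) unfolding bilip_def by simp
  thus ?thesis using bilip_lower(1)[OF assms(1-4)] by auto
qed

lemma bilip_tendsto0:
  assumes "bilip h U K1 K2" "\<And>k. x k \<in> U" "0 \<in> U" "h 0 = 0" "x \<longlonglongrightarrow> 0"
  shows "(\<lambda>k. h (x k)) \<longlonglongrightarrow> 0"
proof (rule Lim_null_comparison)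
  show "\<forall>\<^sub>F k in sequentially. norm (h (x k)) \<le> K2 * norm (x k)"
    using bilip_lower(2)[OF assms(1) assms(2) assms(3,4)] by simp
  have "(\<lambda>k. norm (x k)) \<longlonglongrightarrow> 0" using assms(5) by (rule tendsto_norm_zero)
  thus "(\<lambda>k. K2 * norm (x k)) \<longlonglongrightarrow> 0" by (rule tendsto_mult_right_zero)
qed

lemma RelI:
  assumes "\<And>k. x k \<in> W \<inter> U - {0}" "x \<longlonglongrightarrow> 0" "(\<lambda>k. x k /\<^sub>R norm (x k)) \<longlonglongrightarrow> a" "a \<in> m"
    "(\<lambda>k. h (x k) /\<^sub>R norm (h (x k))) \<longlonglongrightarrow> b" "b \<in> l"
  shows "Rel h U W m l"
  unfolding Rel_def using assms by blast

lemma total: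
  fixes h :: "complex^'n \<Rightarrow> complex^'n"
  assumes bl: "bilip h U K1 K2" and U: "open U" "0 \<in> U" and h0: "h 0 = 0"
    and hW: "h ` (W1 \<inter> U) \<subseteq> W2" and m: "complex_line m" and mc: "m \<subseteq> tangent_cone W1"
    and cone2: "tangent_cone W2 = \<Union>L"
  shows "\<exists>l\<in>L. Rel h U W1 m l"
proof -
  obtain a where a: "norm a = 1" "m = {c *s a | c. True}" using line_unit[OF m] by blast
  have "a \<in> m" using a(2) by (metis (mono_tags, lifting) mem_Collect_eq vector_smult_lid)
  hence "a \<in> tangent_directions W1" using mc a(1) cone_unit_dir by blast
  then obtain x where x: "\<And>i. x i \<in> W1 - {0}" "x \<longlonglongrightarrow> 0" "(\<lambda>i. x i /\<^sub>R norm (x i)) \<longlonglongrightarrow> a"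
    unfolding tangent_directions_def by blast
  obtain rU where rU: "rU > 0" "ball 0 rU \<subseteq> U" using U open_contains_ball by blast
  have "\<forall>\<^sub>F k in sequentially. dist (x k) 0 < rU" using x(2) rU(1) by (rule tendstoD)
  then obtain N where N: "\<forall>k\<ge>N. dist (x k) 0 < rU" unfolding eventually_sequentially by blast
  define y where "y k = x (k + N)" for k
  have yU: "y k \<in> U" for k using N rU(2) by (auto simp: y_def dist_norm)
  have yW: "y k \<in> W1 - {0}" for k using x(1) by (simp add: y_def)
  have y0: "y \<longlonglongrightarrow> 0" unfolding y_def using LIMSEQ_ignore_initial_segment[OF x(2)] .
  have yd: "(\<lambda>k. y k /\<^sub>R norm (y k)) \<longlonglongrightarrow> a"
    unfolding y_def using LIMSEQ_ignore_initial_segment[OF x(3)] .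
  have hy0: "h (y k) \<noteq> 0" for k using bilip_nz[OF bl yU U(2) h0] yW by auto
  define v where "v k = h (y k) /\<^sub>R norm (h (y k))" for k
  have "norm (v k) = 1" for k using hy0 by (simp add: v_def)
  then obtain \<sigma> b where s: "strict_mono \<sigma>" "(v \<circ> \<sigma>) \<longlonglongrightarrow> b" "norm b = 1"
    using unit_subseq[of v] by blast
  have hyt: "(\<lambda>k. h (y k)) \<longlonglongrightarrow> 0" using bilip_tendsto0[OF bl yU U(2) h0 y0] .
  have "b \<in> tangent_directions W2"
    unfolding tangent_directions_def
  proof (intro CollectI conjI exI[of _ "\<lambda>k. h (y (\<sigma> k))"] allI)
    show "norm b = 1" by fact
    show "h (y (\<sigma> k)) \<in> W2 - {0}" for k using hW yU yW hy0 by auto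
    show "(\<lambda>k. h (y (\<sigma> k))) \<longlonglongrightarrow> 0" using LIMSEQ_subseq_LIMSEQ[OF hyt s(1)] by (simp add: o_def)
    show "(\<lambda>k. h (y (\<sigma> k)) /\<^sub>R norm (h (y (\<sigma> k)))) \<longlonglongrightarrow> b" using s(2) by (simp add: o_def v_def)
  qed
  hence "b \<in> \<Union>L" using cone2 tdir_in_cone by blast
  then obtain l where l: "l \<in> L" "b \<in> l" by blast
  have "Rel h U W1 m l"
  proof (rule RelI[of "y \<circ> \<sigma>" _ _ a _ _ b])
    show "(y \<circ> \<sigma>) k \<in> W1 \<inter> U - {0}" for k using yU yW by simp
    show "(y \<circ> \<sigma>) \<longlonglongrightarrow> 0" using LIMSEQ_subseq_LIMSEQ[OF y0 s(1)] .
    show "(\<lambda>k. (y \<circ> \<sigma>) k /\<^sub>R norm ((y \<circ> \<sigma>) k)) \<longlonglongrightarrow> a"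
      using LIMSEQ_subseq_LIMSEQ[OF yd s(1)] by (simp add: o_def)
    show "a \<in> m" by fact
    show "(\<lambda>k. h ((y \<circ> \<sigma>) k) /\<^sub>R norm (h ((y \<circ> \<sigma>) k))) \<longlonglongrightarrow> b" using s(2) by (simp add: o_def v_def)
    show "b \<in> l" by fact
  qed
  thus ?thesis using l by blast
qed

lemma transfer:
  fixes h :: "complex^'n \<Rightarrow> complex^'n"
  assumes bl: "bilip h U K1 K2" and U: "0 \<in> U" and h0: "h 0 = 0"
    and inv: "\<forall>x\<in>U. h' (h x) = x" and hUV: "h ` U \<subseteq> V" and hW: "h ` (W1 \<inter> U) \<subseteq> W2"
    and R: "Rel h U W1 m l"
  shows "Rel h' V W2 l m"
proof -
  obtain x a b where x: "\<And>k. x k \<in> W1 \<inter> U - {0}" "x \<longlonglongrightarrow> 0"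
      "(\<lambda>k. x k /\<^sub>R norm (x k)) \<longlonglongrightarrow> a" "a \<in> m" "(\<lambda>k. h (x k) /\<^sub>R norm (h (x k))) \<longlonglongrightarrow> b" "b \<in> l"
    using R unfolding Rel_def by blast
  have xU: "x k \<in> U" for k using x(1) by blast
  show ?thesis
  proof (rule RelI[of "\<lambda>k. h (x k)" _ _ b _ _ a])
    show "h (x k) \<in> W2 \<inter> V - {0}" for k using hW hUV x(1)[of k] bilip_nz[OF bl xU U h0, of k] by auto
    show "(\<lambda>k. h (x k)) \<longlonglongrightarrow> 0" using bilip_tendsto0[OF bl xU U h0 x(2)] .
    show "(\<lambda>k. h (x k) /\<^sub>R norm (h (x k))) \<longlonglongrightarrow> b" by (rule x(5))
    show "b \<in> l" by fact
    show "(\<lambda>k. h' (h (x k)) /\<^sub>R norm (h' (h (x k)))) \<longlonglongrightarrow> a" using x(3) inv xU by simp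
    show "a \<in> m" by fact
  qed
qed

lemma card_le:
  fixes h h' :: "complex^'n \<Rightarrow> complex^'n"
  assumes bl: "bilip h U K1 K2" and bl': "bilip h' V K1' K2'"
    and U: "open U" "0 \<in> U" and V: "open V" "0 \<in> V" and h0: "h 0 = 0" and h'0: "h' 0 = 0"
    and inv: "\<forall>x\<in>U. h' (h x) = x" and hUV: "h ` U \<subseteq> V"
    and hW: "h ` (W1 \<inter> U) \<subseteq> W2" and h'W: "h' ` (W2 \<inter> V) \<subseteq> W1"
    and fM: "finite M" and fL: "finite L" and lM: "\<forall>m\<in>M. complex_line m" and lL: "\<forall>l\<in>L. complex_line l"
    and c1: "tangent_cone W1 = \<Union>M" and c2: "tangent_cone W2 = \<Union>L"
    and sp2: "\<forall>l\<in>L. SP W2 l"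
  shows "card M \<le> card L"
proof -
  have ud1: "\<forall>d>0. \<exists>r>0. \<forall>y\<in>W1. y \<noteq> 0 \<and> norm y < r \<longrightarrow> (\<exists>l\<in>M. near y l d)"
    using unif_dir[OF c1 lM] by blast
  obtain cM where cM: "cM > 0" "\<forall>l\<in>M. \<forall>l'\<in>M. l \<noteq> l' \<longrightarrow> (\<forall>y z z'. z \<in> l \<longrightarrow> z' \<in> l' \<longrightarrow> cM * norm y \<le> dist y z + dist y z')"
    using sep_finite[OF fM lM] by blast
  define \<phi> where "\<phi> m = (SOME l. l \<in> L \<and> Rel h U W1 m l)" for m
  define \<psi> where "\<psi> l = (SOME m. m \<in> M \<and> Rel h' V W2 l m)" for l
  have \<phi>P: "\<phi> m \<in> L \<and> Rel h U W1 m (\<phi> m)" if "m \<in> M" for m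
  proof -
    have "\<exists>l\<in>L. Rel h U W1 m l"
      using total[OF bl U h0 hW] lM that c1 c2 by blast
    thus ?thesis unfolding \<phi>_def by (metis (mono_tags, lifting) someI_ex)
  qed
  have \<psi>P: "\<psi> l \<in> M \<and> Rel h' V W2 l (\<psi> l)" if "l \<in> L" for l
  proof -
    have "\<exists>m\<in>M. Rel h' V W2 l m"
      using total[OF bl' V h'0 h'W] lL that c1 c2 by blast
    thus ?thesis unfolding \<psi>_def by (metis (mono_tags, lifting) someI_ex)
  qed
  have backeq: "\<psi> (\<phi> m) = m" if m: "m \<in> M" for m
  proof -
    have l: "\<phi> m \<in> L" "Rel h U W1 m (\<phi> m)" using \<phi>P[OF m] by auto
    have r1: "Rel h' V W2 (\<phi> m) m" using transfer[OF bl U(2) h0 inv hUV hW l(2)] .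
    have r2: "Rel h' V W2 (\<phi> m) (\<psi> (\<phi> m))" "\<psi> (\<phi> m) \<in> M" using \<psi>P[OF l(1)] by auto
    show ?thesis
      using functional[OF bl' V h'0 h'W _ _ ud1 cM(1) cM(2) r2(1) r1 r2(2) m lM] sp2 lL l(1) by blast
  qed
  have "inj_on \<phi> M" by (rule inj_on_inverseI[of _ \<psi>]) (rule backeq)
  moreover have "\<phi> ` M \<subseteq> L" using \<phi>P by blast
  ultimately show ?thesis using fL by (rule card_inj_on_le)
qed

definition curve_ctx :: "(complex^'n) set \<Rightarrow> (complex^'n) set \<Rightarrow> real \<Rightarrow> bool" where
  "curve_ctx W U0 rman \<longleftrightarrow> open U0 \<and> 0 \<in> U0 \<and> rman > 0 \<and>
     (\<forall>x s. (\<forall>k. s k \<in> W) \<longrightarrow> s \<longlonglongrightarrow> x \<longrightarrow> x \<in> U0 \<longrightarrow> x \<in> W) \<and>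
     complex_curve_manifold (W \<inter> ball 0 rman - {0})"

lemma ctx_from_germ:
  assumes "analytic_curve_germ_at0 W"
  shows "\<exists>U0 rman. curve_ctx W U0 rman"
proof -
  obtain U0 F where U: "open U0" "0 \<in> U0" "finite F" "\<forall>f\<in>F. holomorphic_several f U0"
    "W \<inter> U0 = {z\<in>U0. \<forall>f\<in>F. f z = 0}"
    using assms unfolding analytic_curve_germ_at0_def analytic_germ_at0_def by blast
  obtain rman where r: "rman > 0" "complex_curve_manifold (W \<inter> ball 0 rman - {0})"
    using assms unfolding analytic_curve_germ_at0_def by blast
  have cl: "x \<in> W" if s: "\<forall>k. s k \<in> W" "s \<longlonglongrightarrow> x" and x: "x \<in> U0" for x s
  proof -
    have ev: "\<forall>\<^sub>F k in sequentially. s k \<in> U0" using topological_tendstoD[OF s(2) U(1) x] .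
    have "f x = 0" if f: "f \<in> F" for f
    proof -
      obtain f' where "(f has_derivative f') (at x)" using U(4) f x unfolding holomorphic_several_def by blast
      hence ic: "isCont f x" by (rule has_derivative_continuous)
      have t1: "(\<lambda>k. f (s k)) \<longlonglongrightarrow> f x" using isCont_tendsto_compose[OF ic s(2)] .
      have "\<forall>\<^sub>F k in sequentially. f (s k) = 0"
        using ev
      proof (rule eventually_mono)
        fix k assume "s k \<in> U0"
        hence "s k \<in> W \<inter> U0" using s(1) by blast
        thus "f (s k) = 0" using U(5) f by blast
      qed
      hence t2: "(\<lambda>k. f (s k)) \<longlonglongrightarrow> 0" by (rule tendsto_eventually)
      show ?thesis using LIMSEQ_unique[OF t1 t2] .
    qed
    hence "x \<in> W \<inter> U0" using U(5) x by blast
    thus ?thesis by blast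
  qed
  have "curve_ctx W U0 rman" unfolding curve_ctx_def using U(1,2) r cl by blast
  thus ?thesis by blast
qed

lemma chart:
  fixes W :: "(complex^'n) set"
  assumes ctx: "curve_ctx W U0 rman" and p: "p \<in> W" "p \<noteq> 0" "norm p < rman"
  obtains e and g :: "complex \<Rightarrow> complex^'n" and g' rr where "e > 0" "rr > 0" "\<forall>i. (\<lambda>z. g z $ i) holomorphic_on ball 0 e" "g 0 = p"
    "\<forall>z\<in>ball 0 e. g' (g z) = z" "g ` ball 0 e \<subseteq> W" "W \<inter> ball p rr \<subseteq> g ` ball 0 e"
    "\<forall>y\<in>g ` ball 0 e. g' y \<in> ball 0 e \<and> g (g' y) = y"
    "continuous_on (ball 0 e) g" "continuous_on (g ` ball 0 e) g'"
proof -
  let ?Mf = "W \<inter> ball 0 rman - {0}"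
  have "p \<in> ?Mf" using p by simp
  then obtain r e g g' where c: "r > 0" "e > 0" "\<forall>i. (\<lambda>z. g z $ i) holomorphic_on ball 0 e" "g 0 = p"
    "homeomorphism (ball 0 e) (?Mf \<inter> ball p r) g g'"
    using ctx unfolding curve_ctx_def complex_curve_manifold_def by blast
  have hm: "\<forall>z\<in>ball 0 e. g' (g z) = z" "g ` ball 0 e = ?Mf \<inter> ball p r" "continuous_on (ball 0 e) g"
    "\<forall>y\<in>?Mf \<inter> ball p r. g (g' y) = y" "g' ` (?Mf \<inter> ball p r) = ball 0 e" "continuous_on (?Mf \<inter> ball p r) g'"
    using c(5) unfolding homeomorphism_def by auto
  define rr where "rr = min r (min (norm p) (rman - norm p))"
  have rr: "rr > 0" using c(1) p by (simp add: rr_def)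
  have "W \<inter> ball p rr \<subseteq> ?Mf \<inter> ball p r"
  proof
    fix y assume y: "y \<in> W \<inter> ball p rr"
    hence d: "dist p y < rr" by simp
    have "norm y \<le> norm p + dist p y" using norm_triangle_ineq[of p "y - p"] by (simp add: dist_norm norm_minus_commute)
    hence "norm y < rman" using d by (simp add: rr_def)
    moreover have "y \<noteq> 0" using d by (auto simp: rr_def)
    moreover have "dist p y < r" using d by (simp add: rr_def)
    ultimately show "y \<in> ?Mf \<inter> ball p r" using y by simp
  qed
  hence "W \<inter> ball p rr \<subseteq> g ` ball 0 e" using hm(2) by simp
  moreover have "g ` ball 0 e \<subseteq> W" using hm(2) by auto
  moreover have "\<forall>y\<in>g ` ball 0 e. g' y \<in> ball 0 e \<and> g (g' y) = y" using hm(2,4,5) by auto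
  ultimately show ?thesis using that[OF c(2) rr c(3) c(4) hm(1)] hm(2,3,6) by simp
qed

lemma cinner_holo:
  fixes g :: "complex \<Rightarrow> complex^'n"
  assumes "\<forall>i. (\<lambda>z. g z $ i) holomorphic_on S"
  shows "(\<lambda>z. cinner (g z) a) holomorphic_on S"
  unfolding cinner_def using assms by (intro holomorphic_on_sum holomorphic_on_mult holomorphic_on_const) auto

lemma no_local_max:
  fixes W :: "(complex^'n) set"
  assumes ctx: "curve_ctx W U0 rman" and p: "p \<in> W" "p \<noteq> 0" "norm p < rman"
    and eta: "\<eta> > 0" "\<forall>y\<in>W. dist y p < \<eta> \<longrightarrow> norm y \<le> norm p"
  shows False
proof -
  obtain e and g :: "complex \<Rightarrow> complex^'n" and g' rr where C: "e > 0" "rr > 0" "\<forall>i. (\<lambda>z. g z $ i) holomorphic_on ball 0 e" "g 0 = p"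
    "\<forall>z\<in>ball 0 e. g' (g z) = z" "g ` ball 0 e \<subseteq> W" "W \<inter> ball p rr \<subseteq> g ` ball 0 e"
    "\<forall>y\<in>g ` ball 0 e. g' y \<in> ball 0 e \<and> g (g' y) = y"
    "continuous_on (ball 0 e) g" "continuous_on (g ` ball 0 e) g'"
    by (rule chart[OF ctx p])
  note c = C(1-6) C(9)
  have "0 \<in> ball (0::complex) e" using c(1) by simp
  from c(7)[unfolded continuous_on_iff, rule_format, OF this eta(1)]
  obtain e1 where e1: "e1 > 0" "\<forall>z\<in>ball 0 e. dist z 0 < e1 \<longrightarrow> dist (g z) (g 0) < \<eta>"
    by blast
  define e2 where "e2 = min e e1"
  have e2: "e2 > 0" "ball 0 e2 \<subseteq> ball 0 e" using e1 c(1) by (auto simp: e2_def)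
  have ng: "norm (g z) \<le> norm p" if z: "z \<in> ball 0 e2" for z
  proof -
    have "z \<in> ball 0 e" using z e2(2) by blast
    moreover have "dist z 0 < e1" using z by (simp add: e2_def dist_norm)
    ultimately have "dist (g z) p < \<eta>" using e1(2) c(4) by auto
    moreover have "g z \<in> W" using c(6) \<open>z \<in> ball 0 e\<close> by auto
    ultimately show ?thesis using eta(2) by blast
  qed
  define G where "G z = cinner (g z) p" for z
  have hG: "G holomorphic_on ball 0 e2"
    unfolding G_def using cinner_holo[OF c(3)] e2(2) holomorphic_on_subset by blast
  have G0: "G 0 = complex_of_real ((norm p)^2)" by (simp add: G_def c(4) cinner_self)
  have "norm (G z) \<le> norm (G 0)" if "z \<in> ball 0 e2" for z
  proof -
    have "norm (G z) \<le> norm (g z) * norm p" unfolding G_def by (rule cinner_bound)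
    also have "\<dots> \<le> norm p * norm p" using ng[OF that] by (intro mult_right_mono) auto
    also have "\<dots> = norm (G 0)" by (simp only: G0 norm_of_real) (simp add: power2_eq_square)
    finally show ?thesis .
  qed
  hence "G constant_on ball 0 e2"
    using maximum_modulus_principle[OF hG _ _ _ _ _, of "ball 0 e2" 0] e2(1) by auto
  then obtain yc where yc: "\<forall>x\<in>ball 0 e2. G x = yc" unfolding constant_on_def by blast
  have Gc: "G z = G 0" if "z \<in> ball 0 e2" for z
    using yc that e2(1) by simp
  define z0 where "z0 = complex_of_real (e2 / 2)"
  have z0: "z0 \<in> ball 0 e2" "z0 \<noteq> 0" using e2(1) by (auto simp: z0_def)
  have "(norm (g z0 - p))^2 = (norm (g z0))^2 - 2 * Re (G z0) + (norm p)^2"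
    unfolding G_def by (rule norm_diff_sq)
  also have "\<dots> = (norm (g z0))^2 - (norm p)^2" using Gc[OF z0(1)] G0 by simp
  also have "\<dots> \<le> 0" using ng[OF z0(1)] by (simp add: power_mono)
  finally have "g z0 = p" by simp
  hence "g z0 = g 0" using c(4) by simp
  hence "g' (g z0) = g' (g 0)" by simp
  moreover have "z0 \<in> ball 0 e" using z0(1) e2(2) by blast
  ultimately have "z0 = 0" using c(5) c(1) by simp
  with z0(2) show False by simp
qed

lemma compact_piece:
  fixes W :: "(complex^'n) set"
  assumes ctx: "curve_ctx W U0 rman" and E: "compact E" "E \<noteq> {}" "E \<subseteq> W"
    "\<forall>x\<in>E. x \<noteq> 0 \<and> norm x < rman" "\<forall>x\<in>E. \<exists>\<eta>>0. \<forall>y\<in>W. dist y x < \<eta> \<longrightarrow> y \<in> E"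
  shows False
proof -
  have "continuous_on E norm" by (intro continuous_intros)
  then obtain p where p: "p \<in> E" "\<forall>y\<in>E. norm y \<le> norm p" using continuous_attains_sup[OF E(1,2)] by blast
  obtain \<eta> where "\<eta> > 0" "\<forall>y\<in>W. dist y p < \<eta> \<longrightarrow> y \<in> E" using E(5) p(1) by blast
  thus False using no_local_max[OF ctx, of p \<eta>] p E(3,4) by blast
qed

lemma near_open:
  assumes "near x l d" "d > 0"
  shows "\<exists>\<eta>>0. \<forall>y. dist y x < \<eta> \<longrightarrow> near y l d"
proof -
  obtain z where z: "z \<in> l" "dist x z < d * norm x" using assms(1) unfolding near_def by blast
  define g where "g = d * norm x - dist x z"
  have g: "g > 0" using z by (simp add: g_def)
  define \<eta> where "\<eta> = g / (1 + d)"
  have eta: "\<eta> > 0" using g assms(2) by (simp add: \<eta>_def)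
  have "near y l d" if y: "dist y x < \<eta>" for y
  proof -
    have nx: "norm x \<le> norm y + dist y x" using norm_triangle_ineq[of y "x - y"] by (simp add: dist_norm norm_minus_commute)
    have "(1 + d) * dist y x < g" using y assms(2) by (simp add: \<eta>_def field_simps)
    have "dist y z \<le> dist y x + dist x z" by (rule dist_triangle)
    also have "\<dots> = dist y x + d * norm x - g" by (simp add: g_def)
    also have "\<dots> \<le> dist y x + d * (norm y + dist y x) - g" using nx assms(2) by (simp add: mult_left_mono)
    also have "\<dots> = (1 + d) * dist y x + d * norm y - g" by (simp add: algebra_simps)
    also have "\<dots> < d * norm y" using \<open>(1 + d) * dist y x < g\<close> by simp
    finally show ?thesis using z(1) unfolding near_def by blast
  qed
  thus ?thesis using eta by blast
qed

lemma cinner_unit_le: "norm a = 1 \<Longrightarrow> cmod (cinner x a) \<le> norm x"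
  using cinner_bound[of x a] by simp

lemma near_proj:
  assumes a: "norm a = 1" "m = {c *s a | c. True}" and n: "near x m d"
  shows "cmod (cinner x a) \<ge> (1 - 2 * d) * norm x" "norm (x - cinner x a *s a) \<le> 2 * d * norm x"
proof -
  obtain z where z: "z \<in> m" "dist x z < d * norm x" using n unfolding near_def by blast
  obtain c where c: "z = c *s a" using z(1) a(2) by blast
  have ca: "cinner z a = c" using a(1) by (simp add: c cinner_smult cinner_self)
  have d1: "cmod (cinner x a - c) \<le> norm (x - z)"
    using cinner_unit_le[OF a(1), of "x - z"] by (simp add: cinner_diff ca)
  have "x - cinner x a *s a = (x - z) + (c - cinner x a) *s a"
    by (simp add: c vec_eq_iff algebra_simps)
  hence "norm (x - cinner x a *s a) \<le> norm (x - z) + norm ((c - cinner x a) *s a)"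
    using norm_triangle_ineq[of "x - z" "(c - cinner x a) *s a"] by simp
  also have "norm (x - z) + norm ((c - cinner x a) *s a) = norm (x - z) + cmod (c - cinner x a)" by (simp only: norm_smult_vec a(1) mult_1_right)
  also have "\<dots> \<le> 2 * norm (x - z)"
  proof -
    have "cmod (c - cinner x a) \<le> norm (x - z)" using d1 by (simp add: norm_minus_commute)
    thus ?thesis by linarith
  qed
  also have "\<dots> \<le> 2 * d * norm x" using z(2) by (simp add: dist_norm)
  finally show "norm (x - cinner x a *s a) \<le> 2 * d * norm x" .
  have nz: "norm z = cmod c" using a(1) by (simp add: c norm_smult_vec)
  have "norm x \<le> norm (x - z) + norm z" using norm_triangle_ineq[of "x - z" z] by simp
  moreover have "cmod c \<le> cmod (cinner x a) + cmod (cinner x a - c)"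
    using norm_triangle_ineq[of "cinner x a" "c - cinner x a"] by (simp add: norm_minus_commute)
  ultimately have "norm x \<le> cmod (cinner x a) + 2 * norm (x - z)" using d1 nz by linarith
  thus "cmod (cinner x a) \<ge> (1 - 2 * d) * norm x" using z(2) by (simp add: dist_norm algebra_simps)
qed

locale sps =
  fixes W :: "(complex^'n) set" and U0 :: "(complex^'n) set" and rman :: real
    and M :: "(complex^'n) set set" and m :: "(complex^'n) set" and a :: "complex^'n"
    and \<delta> R0 cM :: real
  assumes ctx: "curve_ctx W U0 rman"
    and R0: "R0 > 0" "ball 0 R0 \<subseteq> U0" "R0 \<le> rman"
    and a: "norm a = 1" "m = {c *s a | c. True}" "m \<in> M"
    and lines: "\<forall>l\<in>M. complex_line l"
    and ud: "\<forall>y\<in>W. y \<noteq> 0 \<and> norm y < R0 \<longrightarrow> (\<exists>l\<in>M. near y l \<delta>)"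
    and sep: "\<forall>l\<in>M. \<forall>l'\<in>M. l \<noteq> l' \<longrightarrow> (\<forall>y z z'. z \<in> l \<longrightarrow> z' \<in> l' \<longrightarrow> cM * norm y \<le> dist y z + dist y z')"
    and dl: "\<delta> > 0" "\<delta> \<le> 1/4" "2 * \<delta> \<le> cM"
begin

definition P :: "complex^'n \<Rightarrow> bool" where
  "P x \<longleftrightarrow> x \<in> W \<and> x \<noteq> 0 \<and> norm x < R0 \<and> near x m \<delta>"

definition f :: "complex^'n \<Rightarrow> complex" where "f x = cinner x a"

lemma f_cont: "continuous_on S f"
  unfolding f_def by (intro continuous_on_cinner continuous_on_id)

lemma f_tendsto: "(s \<longlonglongrightarrow> x) \<Longrightarrow> (\<lambda>k. f (s k)) \<longlonglongrightarrow> f x"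
  unfolding f_def by (rule tendsto_cinner)

lemma f_le: "cmod (f x) \<le> norm x"
  unfolding f_def using cinner_unit_le[OF a(1)] .

lemma P_bounds:
  assumes "P x"
  shows "norm x \<le> 2 * cmod (f x)" "norm (x - f x *s a) \<le> 2 * \<delta> * norm x"
proof -
  have n: "near x m \<delta>" using assms by (simp add: P_def)
  have "(1 - 2 * \<delta>) * norm x \<le> cmod (f x)" using near_proj(1)[OF a(1,2) n] by (simp add: f_def)
  moreover have "(1/2) * norm x \<le> (1 - 2 * \<delta>) * norm x" using dl by (intro mult_right_mono) auto
  ultimately show "norm x \<le> 2 * cmod (f x)" by simp
  show "norm (x - f x *s a) \<le> 2 * \<delta> * norm x" using near_proj(2)[OF a(1,2) n] by (simp add: f_def)
qed

lemma W_closed: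
  assumes "\<And>k. s k \<in> W" "s \<longlonglongrightarrow> x" "norm x < R0"
  shows "x \<in> W"
proof -
  have "x \<in> U0" using R0(2) assms(3) by auto
  thus ?thesis using ctx assms(1,2) unfolding curve_ctx_def by blast
qed

lemma P_open:
  assumes "P x"
  shows "\<exists>\<eta>>0. \<forall>y\<in>W. dist y x < \<eta> \<longrightarrow> P y"
proof -
  have x: "x \<in> W" "x \<noteq> 0" "norm x < R0" "near x m \<delta>" using assms by (auto simp: P_def)
  obtain \<eta>1 where e1: "\<eta>1 > 0" "\<forall>y. dist y x < \<eta>1 \<longrightarrow> near y m \<delta>" using near_open[OF x(4) dl(1)] by blast
  define \<eta> where "\<eta> = min \<eta>1 (min (norm x) (R0 - norm x))"
  have "\<eta> > 0" using e1(1) x by (simp add: \<eta>_def)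
  moreover have "P y" if "y \<in> W" "dist y x < \<eta>" for y
  proof -
    have "norm y \<le> norm x + dist y x" using norm_triangle_ineq[of x "y - x"] by (simp add: dist_norm)
    moreover have "norm x \<le> norm y + dist y x" using norm_triangle_ineq[of y "x - y"] by (simp add: dist_norm norm_minus_commute)
    ultimately show ?thesis using that e1(2) unfolding P_def \<eta>_def by auto
  qed
  ultimately show ?thesis by blast
qed

lemma P_closed:
  assumes s: "\<And>k. P (s k)" "s \<longlonglongrightarrow> x" and x: "x \<in> W" "x \<noteq> 0" "norm x < R0"
  shows "P x"
proof -
  obtain l where l: "l \<in> M" "near x l \<delta>" using ud x by blast
  obtain \<eta> where e: "\<eta> > 0" "\<forall>y. dist y x < \<eta> \<longrightarrow> near y l \<delta>" using near_open[OF l(2) dl(1)] by blast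
  have "\<forall>\<^sub>F k in sequentially. dist (s k) x < \<eta>" using s(2) e(1) by (rule tendstoD)
  then obtain N where "dist (s N) x < \<eta>" unfolding eventually_sequentially by blast
  hence n1: "near (s N) l \<delta>" using e(2) by blast
  have n2: "near (s N) m \<delta>" using s(1)[of N] by (simp add: P_def)
  have "l = m"
  proof (rule ccontr)
    assume "l \<noteq> m"
    hence "\<forall>y z z'. z \<in> l \<longrightarrow> z' \<in> m \<longrightarrow> cM * norm y \<le> dist y z + dist y z'" using sep l(1) a(3) by blast
    from near_unique[OF n1 n2 _ this] dl(3) show False by simp
  qed
  thus ?thesis using l x unfolding P_def by simp
qed

end

context sps
begin

lemma chart_at:
  assumes "P p"
  obtains e and g :: "complex \<Rightarrow> complex^'n" and g' rr where "e > 0" "rr > 0" "\<forall>i. (\<lambda>z. g z $ i) holomorphic_on ball 0 e" "g 0 = p"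
    "\<forall>z\<in>ball 0 e. g' (g z) = z" "g ` ball 0 e \<subseteq> W" "W \<inter> ball p rr \<subseteq> g ` ball 0 e"
    "\<forall>y\<in>g ` ball 0 e. g' y \<in> ball 0 e \<and> g (g' y) = y"
    "continuous_on (ball 0 e) g" "continuous_on (g ` ball 0 e) g'"
proof -
  have p: "p \<in> W" "p \<noteq> 0" "norm p < rman" using assms R0(3) by (auto simp: P_def)
  obtain e and g :: "complex \<Rightarrow> complex^'n" and g' rr where C: "e > 0" "rr > 0" "\<forall>i. (\<lambda>z. g z $ i) holomorphic_on ball 0 e" "g 0 = p"
    "\<forall>z\<in>ball 0 e. g' (g z) = z" "g ` ball 0 e \<subseteq> W" "W \<inter> ball p rr \<subseteq> g ` ball 0 e"
    "\<forall>y\<in>g ` ball 0 e. g' y \<in> ball 0 e \<and> g (g' y) = y"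
    "continuous_on (ball 0 e) g" "continuous_on (g ` ball 0 e) g'"
    by (rule chart[OF ctx p])
  show ?thesis by (rule that[OF C])
qed

lemma fg_holo:
  assumes "\<forall>i. (\<lambda>z. g z $ i) holomorphic_on S"
  shows "(\<lambda>z. f (g z)) holomorphic_on S"
  unfolding f_def by (rule cinner_holo[OF assms])

lemma identity_extend:
  fixes g :: "complex \<Rightarrow> complex^'n"
  assumes e: "e > 0" and hol: "\<forall>i. (\<lambda>z. g z $ i) holomorphic_on ball 0 e" and cg: "continuous_on (ball 0 e) g"
    and gW: "g ` ball 0 e \<subseteq> W"
    and z0: "z0 \<in> ball 0 e" and eta: "\<eta> > 0" "\<forall>y\<in>W. dist y (g z0) < \<eta> \<longrightarrow> f y = w"
  shows "\<forall>z\<in>ball 0 e. f (g z) = w"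
proof -
  from cg[unfolded continuous_on_iff, rule_format, OF z0 eta(1)]
  obtain \<rho> where rho: "\<rho> > 0" "\<forall>z\<in>ball 0 e. dist z z0 < \<rho> \<longrightarrow> dist (g z) (g z0) < \<eta>" by blast
  define S where "S = ball z0 \<rho> \<inter> ball 0 e"
  have "z0 \<in> S" using z0 rho(1) by (simp add: S_def)
  hence S: "open S" "S \<noteq> {}" "S \<subseteq> ball 0 e" by (simp add: S_def open_Int, blast, simp add: S_def)
  have eqS: "f (g z) = w" if "z \<in> S" for z
  proof -
    have "z \<in> ball 0 e" "dist z z0 < \<rho>" using that by (auto simp: S_def dist_commute)
    hence "dist (g z) (g z0) < \<eta>" "g z \<in> W" using rho(2) gW by auto
    thus ?thesis using eta(2) by blast
  qed
  show ?thesis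
  proof
    fix z :: complex assume z: "z \<in> ball 0 e"
    show "f (g z) = w"
      using analytic_continuation_open[OF S(1) open_ball S(2) convex_connected[OF convex_ball] S(3)
          fg_holo[OF hol] holomorphic_on_const eqS z] by simp
  qed
qed

lemma nonconst:
  fixes g :: "complex \<Rightarrow> complex^'n"
  assumes Px0: "P x0" and wR: "cmod (f x0) < R0 / 4"
    and e: "e > 0" "rr > 0" and hol: "\<forall>i. (\<lambda>z. g z $ i) holomorphic_on ball 0 e" and g0: "g 0 = x0"
    and gW: "g ` ball 0 e \<subseteq> W" and cov: "W \<inter> ball x0 rr \<subseteq> g ` ball 0 e"
  shows "\<not> (\<lambda>z. f (g z)) constant_on ball 0 e"
proof
  assume "(\<lambda>z. f (g z)) constant_on ball 0 e"
  then obtain yc where yc: "\<forall>z\<in>ball 0 e. f (g z) = yc" unfolding constant_on_def by blast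
  define w where "w = f x0"
  have "f (g 0) = yc" using yc e(1) by simp
  hence gw: "\<forall>z\<in>ball 0 e. f (g z) = w" using yc g0 by (simp add: w_def)
  define E where "E = {x. P x \<and> (\<exists>\<eta>>0. \<forall>y\<in>W. dist y x < \<eta> \<longrightarrow> f y = w)}"
  have x0E: "x0 \<in> E"
  proof -
    have A: "\<forall>y\<in>W. dist y x0 < rr \<longrightarrow> f y = w"
    proof (intro ballI impI)
      fix y assume "y \<in> W" "dist y x0 < rr"
      hence "y \<in> g ` ball 0 e" using cov by (auto simp: dist_commute)
      thus "f y = w" using gw by auto
    qed
    show ?thesis unfolding E_def mem_Collect_eq by (intro conjI Px0 exI[of _ rr] e(2) A)
  qed
  have Efw: "f x = w" if "x \<in> E" for x
  proof -
    from that obtain \<eta> where h: "\<eta> > 0" "\<forall>y\<in>W. dist y x < \<eta> \<longrightarrow> f y = w" unfolding E_def by blast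
    have "x \<in> W" using that by (simp add: E_def P_def)
    moreover have "dist x x < \<eta>" using h(1) by simp
    ultimately show ?thesis using h(2) by blast
  qed
  have Enorm: "cmod w \<le> norm x \<and> norm x \<le> 2 * cmod w" if "x \<in> E" for x
  proof -
    have "P x" using that by (simp add: E_def)
    from P_bounds(1)[OF this] f_le[of x] Efw[OF that] show ?thesis by simp
  qed
  have w0: "w \<noteq> 0" using Enorm[OF x0E] Px0 by (auto simp: P_def)
  have EW: "E \<subseteq> W" by (auto simp: E_def P_def)
  have Eopen: "\<exists>\<eta>>0. \<forall>y\<in>W. dist y x < \<eta> \<longrightarrow> y \<in> E" if x: "x \<in> E" for x
  proof -
    have "P x" using x by (simp add: E_def)
    from P_open[OF this] obtain \<eta>1 where e1: "\<eta>1 > 0" "\<forall>y\<in>W. dist y x < \<eta>1 \<longrightarrow> P y" by blast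
    from x obtain \<eta>2 where e2: "\<eta>2 > 0" "\<forall>y\<in>W. dist y x < \<eta>2 \<longrightarrow> f y = w" unfolding E_def by blast
    define \<eta> where "\<eta> = min \<eta>1 (\<eta>2 / 2)"
    have "\<eta> > 0" using e1 e2 by (simp add: \<eta>_def)
    moreover have "y \<in> E" if y: "y \<in> W" "dist y x < \<eta>" for y
    proof -
      have "P y" using e1 y by (simp add: \<eta>_def)
      moreover have "\<forall>y'\<in>W. dist y' y < \<eta>2 / 2 \<longrightarrow> f y' = w"
      proof (intro ballI impI)
        fix y' assume "y' \<in> W" "dist y' y < \<eta>2 / 2"
        moreover have "dist y' x \<le> dist y' y + dist y x" by (rule dist_triangle)
        ultimately have "dist y' x < \<eta>2" using y(2) by (simp add: \<eta>_def)
        thus "f y' = w" using e2 \<open>y' \<in> W\<close> by blast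
      qed
      moreover have "\<eta>2 / 2 > 0" using e2(1) by simp
      ultimately show ?thesis unfolding E_def by blast
    qed
    ultimately show ?thesis by blast
  qed
  have Eclosed: "closed E"
    unfolding closed_sequential_limits
  proof (intro allI impI, elim conjE)
    fix s x assume s: "\<forall>k. s k \<in> E" and lim: "s \<longlonglongrightarrow> x"
    have fx: "f x = w"
    proof -
      have t1: "(\<lambda>k. f (s k)) \<longlonglongrightarrow> f x" using f_tendsto[OF lim] .
      have "(\<lambda>k. f (s k)) = (\<lambda>k. w)" using Efw s by auto
      hence t2: "(\<lambda>k. f (s k)) \<longlonglongrightarrow> w" by simp
      show ?thesis using LIMSEQ_unique[OF t1 t2] .
    qed
    have nx1: "norm x \<ge> cmod w" using f_le[of x] fx by simp
    have "\<forall>k. norm (s k) \<le> 2 * cmod w" using Enorm s by blast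
    hence ev: "\<forall>\<^sub>F k in sequentially. norm (s k) \<le> 2 * cmod w" by simp
    have nx2: "norm x \<le> 2 * cmod w" by (rule Lim_norm_ubound[OF trivial_limit_sequentially lim ev])
    have "2 * cmod w < R0" using wR norm_ge_zero[of "f x0"] unfolding w_def by linarith
    hence xR: "norm x < R0" using nx2 by simp
    have x0: "x \<noteq> 0" using nx1 w0 by auto
    have sW: "\<And>k. s k \<in> W" using s EW by blast
    have xW: "x \<in> W" using W_closed[OF sW lim xR] .
    have "\<And>k. P (s k)" using s by (simp add: E_def)
    from P_closed[OF this lim xW x0 xR] have Px: "P x" .
    obtain ex and gx :: "complex \<Rightarrow> complex^'n" and gx' rx where C: "ex > 0" "rx > 0" "\<forall>i. (\<lambda>z. gx z $ i) holomorphic_on ball 0 ex" "gx 0 = x"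
      "\<forall>z\<in>ball 0 ex. gx' (gx z) = z" "gx ` ball 0 ex \<subseteq> W" "W \<inter> ball x rx \<subseteq> gx ` ball 0 ex"
      "\<forall>y\<in>gx ` ball 0 ex. gx' y \<in> ball 0 ex \<and> gx (gx' y) = y"
      "continuous_on (ball 0 ex) gx" "continuous_on (gx ` ball 0 ex) gx'"
      by (rule chart_at[OF Px])
    have "\<forall>\<^sub>F k in sequentially. dist (s k) x < rx" using lim C(2) by (rule tendstoD)
    then obtain N where N: "dist (s N) x < rx" unfolding eventually_sequentially by blast
    have "s N \<in> W \<inter> ball x rx" using sW[of N] N by (simp add: dist_commute)
    hence "s N \<in> gx ` ball 0 ex" using C(7) by blast
    then obtain zN where zN: "zN \<in> ball 0 ex" "gx zN = s N" by (metis imageE)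
    have sNE: "s N \<in> E" using s by blast
    then obtain \<eta> where eta: "\<eta> > 0" "\<forall>y\<in>W. dist y (s N) < \<eta> \<longrightarrow> f y = w" unfolding E_def by blast
    have "\<forall>y\<in>W. dist y (gx zN) < \<eta> \<longrightarrow> f y = w" using eta(2) zN(2) by simp
    from identity_extend[OF C(1) C(3) C(9) C(6) zN(1) eta(1) this]
    have all: "\<forall>z\<in>ball 0 ex. f (gx z) = w" .
    have B: "\<forall>y\<in>W. dist y x < rx \<longrightarrow> f y = w"
    proof (intro ballI impI)
      fix y assume y: "y \<in> W" "dist y x < rx"
      hence "y \<in> W \<inter> ball x rx" by (simp add: dist_commute)
      hence "y \<in> gx ` ball 0 ex" using C(7) by blast
      then obtain z where "z \<in> ball 0 ex" "y = gx z" by blast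
      thus "f y = w" using all by simp
    qed
    show "x \<in> E" unfolding E_def mem_Collect_eq by (intro conjI Px exI[of _ rx] C(2) B)
  qed
  have "bounded E"
  proof -
    have "E \<subseteq> cball 0 (2 * cmod w)" using Enorm by auto
    thus ?thesis using bounded_cball bounded_subset by blast
  qed
  hence cE: "compact E" using Eclosed by (simp add: compact_eq_bounded_closed)
  have neE: "E \<noteq> {}" using x0E by blast
  have nz: "\<forall>x\<in>E. x \<noteq> 0 \<and> norm x < rman" using R0(3) by (auto simp: E_def P_def)
  have Eop: "\<forall>x\<in>E. \<exists>\<eta>>0. \<forall>y\<in>W. dist y x < \<eta> \<longrightarrow> y \<in> E" using Eopen by blast
  show False by (rule compact_piece[OF ctx cE neE EW nz Eop])
qed

end

context sps
begin

definition T :: "complex \<Rightarrow> bool" where "T w \<longleftrightarrow> (\<exists>x. P x \<and> f x = w)"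

lemma open_step:
  assumes Tw: "T w" and wR: "cmod w < R0 / 4"
  shows "\<exists>d>0. \<forall>w'. dist w' w < d \<longrightarrow> T w'"
proof -
  obtain x0 where x0: "P x0" "f x0 = w" using Tw unfolding T_def by blast
  obtain e and g :: "complex \<Rightarrow> complex^'n" and g' rr where C: "e > 0" "rr > 0" "\<forall>i. (\<lambda>z. g z $ i) holomorphic_on ball 0 e" "g 0 = x0"
    "\<forall>z\<in>ball 0 e. g' (g z) = z" "g ` ball 0 e \<subseteq> W" "W \<inter> ball x0 rr \<subseteq> g ` ball 0 e"
    "\<forall>y\<in>g ` ball 0 e. g' y \<in> ball 0 e \<and> g (g' y) = y"
    "continuous_on (ball 0 e) g" "continuous_on (g ` ball 0 e) g'"
    by (rule chart_at[OF x0(1)])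
  have hol: "(\<lambda>z. f (g z)) holomorphic_on ball 0 e" by (rule fg_holo[OF C(3)])
  have nc: "\<not> (\<lambda>z. f (g z)) constant_on ball 0 e"
    by (rule nonconst[OF x0(1) _ C(1) C(2) C(3) C(4) C(6) C(7)]) (subst x0(2), rule wR)
  obtain \<eta> where eta: "\<eta> > 0" "\<forall>y\<in>W. dist y x0 < \<eta> \<longrightarrow> P y" using P_open[OF x0(1)] by blast
  have "0 \<in> ball (0::complex) e" using C(1) by simp
  from C(9)[unfolded continuous_on_iff, rule_format, OF this eta(1)]
  obtain e1 where e1: "e1 > 0" "\<forall>z\<in>ball 0 e. dist z 0 < e1 \<longrightarrow> dist (g z) (g 0) < \<eta>" by blast
  define e2 where "e2 = min e e1"
  have e2: "e2 > 0" "ball 0 e2 \<subseteq> ball 0 e" using e1 C(1) by (auto simp: e2_def)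
  have Pg: "P (g z)" if z: "z \<in> ball 0 e2" for z
  proof -
    have ze: "z \<in> ball 0 e" using z e2(2) by blast
    moreover have "dist z 0 < e1" using z by (simp add: e2_def dist_norm)
    ultimately have "dist (g z) x0 < \<eta>" using e1(2) C(4) by auto
    moreover have "g z \<in> W" using C(6) ze by blast
    ultimately show ?thesis using eta(2) by blast
  qed
  have "open ((\<lambda>z. f (g z)) ` ball 0 e2)"
    by (rule open_mapping_thm[OF hol open_ball connected_ball open_ball e2(2) nc])
  moreover have "w \<in> (\<lambda>z. f (g z)) ` ball 0 e2" using e2(1) C(4) x0(2) by (intro image_eqI[of _ _ 0]) auto
  ultimately obtain d where d: "d > 0" "ball w d \<subseteq> (\<lambda>z. f (g z)) ` ball 0 e2"
    using open_contains_ball by blast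
  have "T w'" if "dist w' w < d" for w'
  proof -
    have "w' \<in> ball w d" using that by (simp add: dist_commute)
    then obtain z where "z \<in> ball 0 e2" "w' = f (g z)" using d(2) by blast
    thus ?thesis unfolding T_def using Pg by blast
  qed
  thus ?thesis using d(1) by blast
qed

lemma closed_step:
  assumes w: "w \<noteq> 0" "cmod w < R0 / 4" and nT: "\<not> T w"
  shows "\<exists>d>0. \<forall>w'. w' \<noteq> 0 \<and> cmod w' < R0 / 4 \<and> dist w' w < d \<longrightarrow> \<not> T w'"
proof (rule ccontr)
  assume neg: "\<not> ?thesis"
  have "\<forall>k. \<exists>w' x. w' \<noteq> 0 \<and> cmod w' < R0 / 4 \<and> dist w' w < inverse (real (Suc k)) \<and> P x \<and> f x = w'"
  proof
    fix k
    have "inverse (real (Suc k)) > 0" by simp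
    thus "\<exists>w' x. w' \<noteq> 0 \<and> cmod w' < R0 / 4 \<and> dist w' w < inverse (real (Suc k)) \<and> P x \<and> f x = w'"
      using neg unfolding T_def by blast
  qed
  then obtain ws xs where S: "\<And>k. ws k \<noteq> 0" "\<And>k. cmod (ws k) < R0 / 4" "\<And>k. dist (ws k) w < inverse (real (Suc k))"
    "\<And>k. P (xs k)" "\<And>k. f (xs k) = ws k" by metis
  have xb: "xs k \<in> cball 0 (R0/2)" for k
  proof -
    have "norm (xs k) \<le> 2 * cmod (f (xs k))" by (rule P_bounds(1)[OF S(4)])
    thus ?thesis using S(2)[of k] S(5)[of k] by simp
  qed
  have "seq_compact (cball (0::complex^'n) (R0/2))" by (rule compact_imp_seq_compact) simp
  then obtain x \<sigma> where sx: "x \<in> cball 0 (R0/2)" "strict_mono \<sigma>" "(xs \<circ> \<sigma>) \<longlonglongrightarrow> x"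
    using xb unfolding seq_compact_def by metis
  have wsl: "ws \<longlonglongrightarrow> w"
  proof -
    have "(\<lambda>k. ws k - w) \<longlonglongrightarrow> 0"
    proof (rule Lim_null_comparison)
      show "\<forall>\<^sub>F k in sequentially. norm (ws k - w) \<le> inverse (real (Suc k))"
        using S(3) by (intro always_eventually allI) (simp add: dist_norm less_imp_le)
      show "(\<lambda>k. inverse (real (Suc k))) \<longlonglongrightarrow> 0" by (rule LIMSEQ_inverse_real_of_nat)
    qed
    thus ?thesis by (simp add: LIM_zero_iff)
  qed
  have t1: "(\<lambda>k. f ((xs \<circ> \<sigma>) k)) \<longlonglongrightarrow> f x" by (rule f_tendsto[OF sx(3)])
  have t2: "(\<lambda>k. f ((xs \<circ> \<sigma>) k)) \<longlonglongrightarrow> w"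
    using LIMSEQ_subseq_LIMSEQ[OF wsl sx(2)] S(5) by (simp add: o_def)
  have fx: "f x = w" using LIMSEQ_unique[OF t1 t2] .
  have x0: "x \<noteq> 0" using f_le[of x] fx w(1) by auto
  have xR: "norm x < R0" using sx(1) R0(1) by simp
  have sW: "\<And>k. (xs \<circ> \<sigma>) k \<in> W" using S(4) by (simp add: P_def)
  have xW: "x \<in> W" by (rule W_closed[OF sW sx(3) xR])
  have "\<And>k. P ((xs \<circ> \<sigma>) k)" using S(4) by simp
  from P_closed[OF this sx(3) xW x0 xR] have "P x" .
  hence "T w" using fx unfolding T_def by blast
  with nT show False by simp
qed

lemma T_all:
  assumes start: "P x0" "f x0 \<noteq> 0" "cmod (f x0) < R0 / 4" and w: "w \<noteq> 0" "cmod w < R0 / 4"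
  shows "T w"
proof -
  define D where "D = ball (0::complex) (R0/4) - {0}"
  have conD: "connected D" unfolding D_def by (rule connected_punctured_ball) simp
  have inD: "v \<in> D \<longleftrightarrow> v \<noteq> 0 \<and> cmod v < R0 / 4" for v by (auto simp: D_def)
  have loc: "\<forall>v\<in>D. \<forall>\<^sub>F v' in at v within D. T v = T v'"
  proof
    fix v assume v: "v \<in> D"
    show "\<forall>\<^sub>F v' in at v within D. T v = T v'"
    proof (cases "T v")
      case True
      then obtain d where "d > 0" "\<forall>w'. dist w' v < d \<longrightarrow> T w'" using open_step v inD by blast
      thus ?thesis using True unfolding eventually_at by blast
    next
      case False
      then obtain d where "d > 0" "\<forall>w'. w' \<noteq> 0 \<and> cmod w' < R0 / 4 \<and> dist w' v < d \<longrightarrow> \<not> T w'"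
        using closed_step v inD by blast
      thus ?thesis using False inD unfolding eventually_at by blast
    qed
  qed
  have "f x0 \<in> D" "w \<in> D" using start w inD by auto
  from connected_local_const[OF conD this loc] have "T (f x0) = T w" .
  moreover have "T (f x0)" using start unfolding T_def by blast
  ultimately show ?thesis by simp
qed

end

lemma curve_SP2:
  fixes W :: "(complex^'n) set"
  assumes germ: "analytic_curve_germ_at0 W" and cone: "tangent_cone W = \<Union>M" and fM: "finite M"
    and lines: "\<forall>m\<in>M. complex_line m" and mM: "m \<in> M"
  shows "SP W m"
  unfolding SP_def
proof (intro allI impI)
  fix e :: real assume e: "e > 0"
  obtain U0 rman where ctx: "curve_ctx W U0 rman" using ctx_from_germ[OF germ] by blast
  have U0: "open U0" "0 \<in> U0" "rman > 0" using ctx unfolding curve_ctx_def by auto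
  obtain cM where cM: "cM > 0" "\<forall>l\<in>M. \<forall>l'\<in>M. l \<noteq> l' \<longrightarrow> (\<forall>y z z'. z \<in> l \<longrightarrow> z' \<in> l' \<longrightarrow> cM * norm y \<le> dist y z + dist y z')"
    using sep_finite[OF fM lines] by blast
  define \<delta> where "\<delta> = min (1/4) (min (e/4) (cM/2))"
  have d: "\<delta> > 0" "\<delta> \<le> 1/4" "\<delta> \<le> e/4" "2 * \<delta> \<le> cM" using e cM(1) by (auto simp: \<delta>_def)
  obtain r1 where r1: "r1 > 0" "\<forall>y\<in>W. y \<noteq> 0 \<and> norm y < r1 \<longrightarrow> (\<exists>l\<in>M. near y l \<delta>)"
    using unif_dir[OF cone lines d(1)] by blast
  obtain rU where rU: "rU > 0" "ball 0 rU \<subseteq> U0" using U0(1,2) open_contains_ball by blast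
  define R0 where "R0 = min r1 (min rU rman)"
  have R0: "R0 > 0" "ball 0 R0 \<subseteq> U0" "R0 \<le> rman" "R0 \<le> r1" using r1(1) rU U0(3) by (auto simp: R0_def)
  obtain a where a: "norm a = 1" "m = {c *s a | c. True}" using line_unit lines mM by blast
  have ud: "\<forall>y\<in>W. y \<noteq> 0 \<and> norm y < R0 \<longrightarrow> (\<exists>l\<in>M. near y l \<delta>)" using r1(2) R0(4) by auto
  interpret S: sps W U0 rman M m a \<delta> R0 cM
    by (unfold_locales) (use ctx R0 a mM lines ud cM(2) d in auto)
  have am: "a \<in> m" using a(2) by (metis (mono_tags, lifting) mem_Collect_eq vector_smult_lid)
  have "a \<in> tangent_directions W" using am cone mM a(1) cone_unit_dir by blast
  then obtain x where x: "\<And>i. x i \<in> W - {0}" "x \<longlonglongrightarrow> 0" "(\<lambda>i. x i /\<^sub>R norm (x i)) \<longlonglongrightarrow> a"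
    unfolding tangent_directions_def by blast
  have "\<forall>\<^sub>F k in sequentially. dist (x k) 0 < R0 / 8" using x(2) R0(1) by (intro tendstoD) auto
  moreover have "\<forall>\<^sub>F k in sequentially. dist (x k /\<^sub>R norm (x k)) a < \<delta>" using x(3) d(1) by (rule tendstoD)
  ultimately have "\<forall>\<^sub>F k in sequentially. dist (x k) 0 < R0 / 8 \<and> dist (x k /\<^sub>R norm (x k)) a < \<delta>"
    by (rule eventually_conj)
  then obtain N where "\<forall>k\<ge>N. dist (x k) 0 < R0 / 8 \<and> dist (x k /\<^sub>R norm (x k)) a < \<delta>"
    unfolding eventually_sequentially by blast
  hence N: "norm (x N) < R0 / 8" "dist (x N /\<^sub>R norm (x N)) a < \<delta>" by auto
  have xN: "x N \<in> W" "x N \<noteq> 0" using x(1)[of N] by auto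
  have "dist (x N) (norm (x N) *\<^sub>R a) = norm (x N) * dist (x N /\<^sub>R norm (x N)) a" by (rule scaled_dist[OF xN(2)])
  also have "\<dots> < \<delta> * norm (x N)" using N(2) xN(2) by (simp add: mult.commute)
  finally have "near (x N) m \<delta>" unfolding near_def using line_scaleR[OF _ am] lines mM by blast
  hence Px: "S.P (x N)" using xN N(1) R0(1) unfolding S.P_def by simp
  have f1: "norm (x N) \<le> 2 * cmod (S.f (x N))" by (rule S.P_bounds(1)[OF Px])
  have f0: "S.f (x N) \<noteq> 0" using f1 xN(2) by auto
  have f2: "cmod (S.f (x N)) < R0 / 4" using S.f_le[of "x N"] N(1) R0(1) by simp
  show "\<exists>r>0. \<forall>q\<in>m. q \<noteq> 0 \<and> norm q < r \<longrightarrow> (\<exists>x\<in>W. dist x q \<le> e * norm q)"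
  proof (intro exI[of _ "R0/4"] conjI ballI impI)
    show "R0 / 4 > 0" using R0(1) by simp
    fix q assume q: "q \<in> m" "q \<noteq> 0 \<and> norm q < R0 / 4"
    obtain c where c: "q = c *s a" using q(1) a(2) by blast
    have nq: "norm q = cmod c" using a(1) by (simp add: c norm_smult_vec)
    have "S.T c" by (rule S.T_all[OF Px f0 f2]) (use q nq in auto)
    then obtain y where y: "S.P y" "S.f y = c" unfolding S.T_def by blast
    have "dist y q = norm (y - S.f y *s a)" by (simp add: c y(2) dist_norm)
    also have "\<dots> \<le> 2 * \<delta> * norm y" by (rule S.P_bounds(2)[OF y(1)])
    also have "\<dots> \<le> 2 * \<delta> * (2 * norm q)"
      using S.P_bounds(1)[OF y(1)] y(2) nq d(1) by (intro mult_left_mono) auto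
    also have "\<dots> = (4 * \<delta>) * norm q" by simp
    also have "\<dots> \<le> e * norm q" using d(3) by (intro mult_right_mono) auto
    finally show "\<exists>x\<in>W. dist x q \<le> e * norm q" using y(1) unfolding S.P_def by blast
  qed
qed

theorem proposition3p14:
  fixes W1 W2 :: "(complex^'n) set" and M L :: "(complex^'n) set set"
    and h :: "complex^'n \<Rightarrow> complex^'n"
  assumes "analytic_curve_germ_at0 W1" and "analytic_curve_germ_at0 W2"
    and "finite M" and "\<forall>m\<in>M. complex_line m" and "tangent_cone W1 = \<Union>M"
    and "finite L" and "\<forall>l\<in>L. complex_line l" and "tangent_cone W2 = \<Union>L"
    and "bilipschitz_germ_map h U V" and "h ` (W1 \<inter> U) = W2 \<inter> V"
  shows "card M = card L"
proof -
  note A = assms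
  obtain h' K1 K2 where b: "open U" "open V" "0 \<in> U" "h 0 = 0" "homeomorphism U V h h'"
    "0 < K1" "K1 \<le> K2" "\<forall>x\<in>U. \<forall>y\<in>U. K1 * dist x y \<le> dist (h x) (h y) \<and> dist (h x) (h y) \<le> K2 * dist x y"
    using A(9) unfolding bilipschitz_germ_map_def by blast
  have hm: "h ` U = V" "h' ` V = U" "\<forall>x\<in>U. h' (h x) = x" "\<forall>y\<in>V. h (h' y) = y"
    using b(5) unfolding homeomorphism_def by auto
  have bl: "bilip h U K1 K2" using b(6-8) unfolding bilip_def by blast
  have bl': "bilip h' V (1/K2) (1/K1)"
    unfolding bilip_def
  proof (intro conjI ballI)
    show "0 < 1/K2" using b(6,7) by simp
    show "1/K2 \<le> 1/K1" using b(6,7) by (simp add: frac_le)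
    fix y y' assume y: "y \<in> V" "y' \<in> V"
    then obtain x x' where x: "x \<in> U" "x' \<in> U" "y = h x" "y' = h x'" using hm(1) by blast
    have hx: "h' y = x" "h' y' = x'" using x hm(3) by auto
    have l: "K1 * dist x x' \<le> dist y y'" "dist y y' \<le> K2 * dist x x'" using b(8) x by auto
    show "1/K2 * dist y y' \<le> dist (h' y) (h' y')"
      using l(2) b(6,7) by (simp add: hx divide_le_eq mult.commute)
    show "dist (h' y) (h' y') \<le> 1/K1 * dist y y'"
      using l(1) b(6,7) by (simp add: hx le_divide_eq mult.commute)
  qed
  have V0: "0 \<in> V" using hm(1) b(3,4) by force
  have h'0: "h' 0 = 0" using hm(3) b(3,4) by force
  have hUV: "h ` U \<subseteq> V" using hm(1) by simp
  have hW: "h ` (W1 \<inter> U) \<subseteq> W2" using A(10) by blast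
  have h'W: "h' ` (W2 \<inter> V) \<subseteq> W1"
  proof
    fix z assume "z \<in> h' ` (W2 \<inter> V)"
    then obtain y where "y \<in> W2 \<inter> V" "z = h' y" by blast
    then obtain x where "x \<in> W1 \<inter> U" "y = h x" using A(10) by (metis imageE)
    thus "z \<in> W1" using \<open>z = h' y\<close> hm(3) by auto
  qed
  have h'W2: "h' ` (W2 \<inter> V) \<subseteq> W1" by (rule h'W)
  have sp1: "\<forall>m\<in>M. SP W1 m" using curve_SP2[OF A(1) A(5) A(3) A(4)] by blast
  have sp2: "\<forall>l\<in>L. SP W2 l" using curve_SP2[OF A(2) A(8) A(6) A(7)] by blast
  have inv': "\<forall>y\<in>V. h (h' y) = y" by (rule hm(4))
  have h'UV: "h' ` V \<subseteq> U" using hm(2) by simp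
  have "card M \<le> card L"
    by (rule card_le[OF bl bl' b(1) b(3) b(2) V0 b(4) h'0 hm(3) hUV hW h'W A(3) A(6) A(4) A(7) A(5) A(8) sp2])
  moreover have "card L \<le> card M"
    by (rule card_le[OF bl' bl b(2) V0 b(1) b(3) h'0 b(4) inv' h'UV h'W hW A(6) A(3) A(7) A(4) A(8) A(5) sp1])
  ultimately show ?thesis by simp
qed

end
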